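(* Let $V_0=\mathbb{C}[x_1,x_2,\dots]$ be the polynomial algebra in countably many variables, regarded as a Hopf algebra with each $x_i$ primitive, and let $A$ be a commutative $\mathbb{C}$-algebra. Then for any symmetric $A$-valued bicharacters $s_1,s_2$ on $V_0$ there exists an $A$-valued bicharacter $r$ on $V_0$ such that $\mathrm{EQ}_r$ is an algebra isomorphism \[ \mathrm{EQ}_r\colon (V_0\otimes A,\bullet_{s_1})\to (V_0\otimes A,\bullet_{s_2}) \] intertwining the two $\bullet$ products. In particular, for any symmetric $A$-valued bicharacter $s$ there exists an isomorphism $\mathrm{EQ}_r\colon (V_0\otimes A,\cdot)\to (V_0\otimes A,\bullet_s)$ from the standard product to $\bullet_s$.
   Context: The Hopf structure on $V_0$: $\Delta(x_i)=x_i\otimes 1+1\otimes x_i$, $\eta(x_i)=0$, $S(x_i)=-x_i$. Sweedler notation: $\Delta(a)=\sum a'\otimes a''$, $\Delta^2(a)=\sum a'\otimes a''\otimes a'''$. An $A$-valued bicharacter on $V_0$ is a linear map $r:V_0\otimes V_0\to A$ with $r(1\otimes a)=\eta(a)=r(a\otimes 1)$, $r(ab\otimes c)=\sum r(a\otimes c')r(b\otimes c'')$, $r(a\otimes bc)=\sum r(a'\otimes b)r(a''\otimes c)$. $r^t(a\otimes b)=r(b\otimes a)$; $t$ is symmetric if $t=t^t$. For a symmetric bicharacter $t$, $\bullet_t$ is the $A$-bilinear product on $V_0\otimes A$ extending $a\bullet_t b=\sum a'b'\,t(a''\otimes b'')$; the standard product is $\bullet_\epsilon$ with $\epsilon(a\otimes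 b)=\eta(a)\eta(b)$. $\mathrm{EQ}_r(m)=\sum r(m'\otimes m'')m'''$, extended $A$-linearly to $V_0\otimes A$. *)

theory Defs
  imports Complex_Main "HOL-Library.Poly_Mapping"
begin

text \<open>V_0 = C[x_1,x_2,...] has the monomial basis x^m, m :: nat =>0 nat (exponent vectors).
  V_0 (tensor over C) A is identified with A[x_1,x_2,...], i.e. the finitely supported maps
  mono =>0 A (coefficient of each monomial).  A C-linear map V_0 (x) V_0 -> A is determined by
  its values on basis pairs, so an A-valued bilinear form on V_0 is a function mono => mono => A.\<close>

type_synonym mono = "nat \<Rightarrow>\<^sub>0 nat"

text \<open>A commutative (unital) C-algebra A: a commutative ring with a unital ring homomorphism C -> A.\<close>
definition complex_algebra_structure :: "(complex \<Rightarrow> 'a::comm_ring_1) \<Rightarrow> bool" where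
  "complex_algebra_structure emb \<longleftrightarrow>
     emb 1 = 1 \<and> (\<forall>x y. emb (x + y) = emb x + emb y) \<and> (\<forall>x y. emb (x * y) = emb x * emb y)"

text \<open>Binomial coefficient of the coproduct: Delta(x^mu) = sum over alpha+beta=mu of
  bcoef mu alpha * x^alpha (x) x^beta  (each x_i primitive).\<close>
definition bcoef :: "mono \<Rightarrow> mono \<Rightarrow> nat" where
  "bcoef \<mu> \<alpha> = (\<Prod>i\<in>Poly_Mapping.keys \<mu>. Poly_Mapping.lookup \<mu> i choose Poly_Mapping.lookup \<alpha> i)"

definition splits :: "mono \<Rightarrow> (mono \<times> mono) set" where
  "splits \<mu> = {(\<alpha>, \<beta>). \<alpha> + \<beta> = \<mu>}"

definition splits3 :: "mono \<Rightarrow> (mono \<times> mono \<times> mono) set" where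
  "splits3 \<mu> = {(\<alpha>, \<beta>, \<gamma>). \<alpha> + \<beta> + \<gamma> = \<mu>}"

definition counit :: "mono \<Rightarrow> 'a::comm_ring_1" where
  "counit m = (if m = 0 then 1 else 0)"

definition is_bichar :: "(mono \<Rightarrow> mono \<Rightarrow> 'a::comm_ring_1) \<Rightarrow> bool" where
  "is_bichar r \<longleftrightarrow>
     (\<forall>\<alpha>. r 0 \<alpha> = counit \<alpha>) \<and> (\<forall>\<alpha>. r \<alpha> 0 = counit \<alpha>) \<and>
     (\<forall>\<alpha> \<beta> \<gamma>. r (\<alpha> + \<beta>) \<gamma> =
        (\<Sum>(\<delta>, \<epsilon>)\<in>splits \<gamma>. of_nat (bcoef \<gamma> \<delta>) * r \<alpha> \<delta> * r \<beta> \<epsilon>)) \<and>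
     (\<forall>\<alpha> \<beta> \<gamma>. r \<alpha> (\<beta> + \<gamma>) =
        (\<Sum>(\<delta>, \<epsilon>)\<in>splits \<alpha>. of_nat (bcoef \<alpha> \<delta>) * r \<delta> \<beta> * r \<epsilon> \<gamma>))"

definition transp_bichar :: "(mono \<Rightarrow> mono \<Rightarrow> 'a) \<Rightarrow> (mono \<Rightarrow> mono \<Rightarrow> 'a)" where
  "transp_bichar r = (\<lambda>\<alpha> \<beta>. r \<beta> \<alpha>)"

definition symmetric_bichar :: "(mono \<Rightarrow> mono \<Rightarrow> 'a::comm_ring_1) \<Rightarrow> bool" where
  "symmetric_bichar t \<longleftrightarrow> is_bichar t \<and> t = transp_bichar t"

text \<open>The product bullet_t on V_0 (x) A, A-bilinear extension of
  a bullet_t b = sum a' b' t(a'' (x) b'').\<close>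
definition bullet :: "(mono \<Rightarrow> mono \<Rightarrow> 'a::comm_ring_1) \<Rightarrow> (mono \<Rightarrow>\<^sub>0 'a) \<Rightarrow> (mono \<Rightarrow>\<^sub>0 'a) \<Rightarrow> (mono \<Rightarrow>\<^sub>0 'a)" where
  "bullet t p q =
     (\<Sum>\<alpha>\<in>Poly_Mapping.keys p. \<Sum>\<beta>\<in>Poly_Mapping.keys q. \<Sum>(\<alpha>1, \<alpha>2)\<in>splits \<alpha>. \<Sum>(\<beta>1, \<beta>2)\<in>splits \<beta>.
        Poly_Mapping.single (\<alpha>1 + \<beta>1)
          (Poly_Mapping.lookup p \<alpha> * Poly_Mapping.lookup q \<beta> * of_nat (bcoef \<alpha> \<alpha>1) * of_nat (bcoef \<beta> \<beta>1) * t \<alpha>2 \<beta>2))"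

text \<open>Standard bicharacter epsilon(a (x) b) = eta(a) eta(b); bullet_epsilon is the usual product.\<close>
definition std_bichar :: "mono \<Rightarrow> mono \<Rightarrow> 'a::comm_ring_1" where
  "std_bichar \<alpha> \<beta> = counit \<alpha> * counit \<beta>"

text \<open>EQ_r(m) = sum r(m' (x) m'') m''', extended A-linearly.  Delta^2(x^mu) =
  sum over alpha+beta+gamma=mu of mu!/(alpha! beta! gamma!) x^alpha (x) x^beta (x) x^gamma,
  and mu!/(alpha!beta!gamma!) = bcoef mu alpha * bcoef (beta+gamma) beta.\<close>
definition EQ :: "(mono \<Rightarrow> mono \<Rightarrow> 'a::comm_ring_1) \<Rightarrow> (mono \<Rightarrow>\<^sub>0 'a) \<Rightarrow> (mono \<Rightarrow>\<^sub>0 'a)" where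
  "EQ r p =
     (\<Sum>\<mu>\<in>Poly_Mapping.keys p. \<Sum>(\<alpha>, \<beta>, \<gamma>)\<in>splits3 \<mu>.
        Poly_Mapping.single \<gamma>
          (Poly_Mapping.lookup p \<mu> * of_nat (bcoef \<mu> \<alpha> * bcoef (\<beta> + \<gamma>) \<beta>) * r \<alpha> \<beta>))"

end

theory Submission
  imports Defs
begin


definition mn :: "(nat \<Rightarrow> nat) \<Rightarrow> nat set \<Rightarrow> mono" where
  "mn w S = (\<Sum>i\<in>S. Poly_Mapping.single (w i) 1)"

lemma mn_empty[simp]: "mn w {} = 0" by (simp add: mn_def)

lemma mn_insert: "finite S \<Longrightarrow> x \<notin> S \<Longrightarrow> mn w (insert x S) = Poly_Mapping.single (w x) 1 + mn w S"
  by (simp add: mn_def)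

lemma mn_union: "finite A \<Longrightarrow> finite B \<Longrightarrow> A \<inter> B = {} \<Longrightarrow> mn w (A \<union> B) = mn w A + mn w B"
  by (simp add: mn_def sum.union_disjoint)

lemma mn_cong: "(\<And>x. x \<in> S \<Longrightarrow> w x = w' x) \<Longrightarrow> mn w S = mn w' S"
  by (simp add: mn_def)

definition deg :: "mono \<Rightarrow> nat" where
  "deg \<mu> = sum (Poly_Mapping.lookup \<mu>) (Poly_Mapping.keys \<mu>)"

lemma deg_superset: "finite K \<Longrightarrow> Poly_Mapping.keys \<mu> \<subseteq> K \<Longrightarrow> deg \<mu> = sum (Poly_Mapping.lookup \<mu>) K"
  unfolding deg_def by (rule sum.mono_neutral_left) (auto simp: in_keys_iff)

lemma deg_add: "deg (\<alpha> + \<beta>) = deg \<alpha> + deg \<beta>"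
proof -
  let ?K = "Poly_Mapping.keys \<alpha> \<union> Poly_Mapping.keys \<beta>"
  have "deg (\<alpha> + \<beta>) = sum (Poly_Mapping.lookup (\<alpha>+\<beta>)) ?K"
    by (rule deg_superset) (auto dest: set_mp[OF keys_add])
  also have "\<dots> = sum (Poly_Mapping.lookup \<alpha>) ?K + sum (Poly_Mapping.lookup \<beta>) ?K"
    by (simp add: lookup_add sum.distrib)
  also have "\<dots> = deg \<alpha> + deg \<beta>"
    by (simp add: deg_superset[of ?K \<alpha>] deg_superset[of ?K \<beta>])
  finally show ?thesis .
qed

lemma deg_zero[simp]: "deg 0 = 0" by (simp add: deg_def)
lemma deg_single[simp]: "deg (Poly_Mapping.single i n) = n" by (simp add: deg_def)

lemma deg_mn: "finite S \<Longrightarrow> deg (mn w S) = card S"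
  by (induction S rule: finite_induct) (simp_all add: mn_insert deg_add)

lemma lookup_le_deg: "Poly_Mapping.lookup \<mu> i \<le> deg \<mu>"
proof (cases "i \<in> Poly_Mapping.keys \<mu>")
  case True then show ?thesis unfolding deg_def by (intro member_le_sum) auto
qed (simp add: in_keys_iff)

lemma mono_rep: "\<exists>w n. mn w {..<n} = \<mu>"
proof (induction "deg \<mu>" arbitrary: \<mu> rule: less_induct)
  case less
  show ?case
  proof (cases "\<mu> = 0")
    case True then show ?thesis by (intro exI[of _ id] exI[of _ 0]) simp
  next
    case False
    then obtain i where i: "i \<in> Poly_Mapping.keys \<mu>"
      by (metis all_not_in_conv keys_eq_empty)
    let ?e = "Poly_Mapping.single i (1::nat)"
    have eq: "\<mu> = (\<mu> - ?e) + ?e"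
      using i by (intro poly_mapping_eqI) (auto simp: lookup_add lookup_minus lookup_single when_def in_keys_iff)
    have "deg \<mu> = deg (\<mu> - ?e) + 1" by (subst eq) (simp add: deg_add)
    then obtain w n where wn: "mn w {..<n} = \<mu> - ?e" using less by force
    have "mn (w(n := i)) {..<Suc n} = ?e + mn (w(n:=i)) {..<n}"
      by (simp add: lessThan_Suc mn_insert)
    also have "mn (w(n:=i)) {..<n} = mn w {..<n}" by (rule mn_cong) auto
    also have "mn w {..<n} = \<mu> - ?e" by (rule wn)
    also have "?e + (\<mu> - ?e) = \<mu>" by (subst add.commute) (rule eq[symmetric])
    finally show ?thesis by blast
  qed
qed

lemma mono_extend:
  assumes "finite P"
  shows "\<exists>w' Q. finite Q \<and> P \<inter> Q = {} \<and> (\<forall>x\<in>P. w' x = w x) \<and> mn w' Q = \<nu>"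
proof -
  obtain v n where v: "mn v {..<n} = \<nu>" using mono_rep by blast
  define N where "N = Suc (Max (insert 0 P))"
  have N: "P \<subseteq> {..<N}" using assms by (auto simp: N_def less_Suc_eq_le)
  define w' where "w' x = (if x < N then w x else v (x - N))" for x
  have "mn w' {N..<N+n} = mn v {..<n}"
    unfolding mn_def
    by (rule sum.reindex_bij_witness[where i="\<lambda>j. j + N" and j="\<lambda>x. x - N"]) (auto simp: w'_def)
  then show ?thesis using N v
    by (intro exI[of _ w'] exI[of _ "{N..<N+n}"]) (auto simp: w'_def)
qed

lemma finite_splits: "finite (splits \<mu>)"
proof -
  let ?B = "{\<alpha>. \<forall>i. Poly_Mapping.lookup \<alpha> i \<le> Poly_Mapping.lookup \<mu> i}"
  have "Poly_Mapping.lookup ` ?B \<subseteq> {f. \<forall>x. (x \<in> Poly_Mapping.keys \<mu> \<longrightarrow> f x \<in> {..deg \<mu>}) \<and> (x \<notin> Poly_Mapping.keys \<mu> \<longrightarrow> f x = 0)}"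
  proof
    fix f assume "f \<in> Poly_Mapping.lookup ` ?B"
    then obtain \<alpha> where f: "f = Poly_Mapping.lookup \<alpha>" and a: "\<forall>i. Poly_Mapping.lookup \<alpha> i \<le> Poly_Mapping.lookup \<mu> i" by blast
    have "f x \<le> deg \<mu>" for x using a lookup_le_deg[of \<mu> x] f by (metis order_trans)
    moreover have "f x = 0" if "x \<notin> Poly_Mapping.keys \<mu>" for x
      using a that f by (metis in_keys_iff le_zero_eq)
    ultimately show "f \<in> {f. \<forall>x. (x \<in> Poly_Mapping.keys \<mu> \<longrightarrow> f x \<in> {..deg \<mu>}) \<and> (x \<notin> Poly_Mapping.keys \<mu> \<longrightarrow> f x = 0)}"
      by simp
  qed
  then have "finite (Poly_Mapping.lookup ` ?B)"
    by (rule finite_subset) (intro finite_set_of_finite_funs; simp)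
  then have fB: "finite ?B"
    by (rule finite_imageD) (rule inj_onI, simp add: poly_mapping.lookup_inject)
  have "splits \<mu> \<subseteq> (\<lambda>\<alpha>. (\<alpha>, \<mu> - \<alpha>)) ` ?B"
  proof
    fix x assume "x \<in> splits \<mu>"
    then obtain a b where x: "x = (a,b)" "a + b = \<mu>" by (auto simp: splits_def)
    then have "b = \<mu> - a" by (simp add: x(2)[symmetric])
    moreover have "a \<in> ?B" using x by (auto simp: lookup_add)
    ultimately show "x \<in> (\<lambda>\<alpha>. (\<alpha>, \<mu> - \<alpha>)) ` ?B" using x by auto
  qed
  then show ?thesis using fB by (rule finite_subset[OF _ finite_imageI])
qed



definition D2 :: "mono \<Rightarrow> (mono \<Rightarrow> mono \<Rightarrow> 'b::comm_semiring_1) \<Rightarrow> 'b" where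
  "D2 \<mu> g = (\<Sum>(\<alpha>,\<beta>)\<in>splits \<mu>. of_nat (bcoef \<mu> \<alpha>) * g \<alpha> \<beta>)"

lemma bcoef_K:
  assumes "finite K" "Poly_Mapping.keys \<nu> \<subseteq> K" "\<And>j. Poly_Mapping.lookup \<alpha> j \<le> Poly_Mapping.lookup \<nu> j"
  shows "bcoef \<nu> \<alpha> = (\<Prod>j\<in>K. Poly_Mapping.lookup \<nu> j choose Poly_Mapping.lookup \<alpha> j)"
  unfolding bcoef_def
proof (rule prod.mono_neutral_left)
  show "\<forall>j\<in>K - Poly_Mapping.keys \<nu>. Poly_Mapping.lookup \<nu> j choose Poly_Mapping.lookup \<alpha> j = 1"
  proof
    fix j assume "j \<in> K - Poly_Mapping.keys \<nu>"
    then have "Poly_Mapping.lookup \<nu> j = 0" by (simp add: in_keys_iff)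
    moreover then have "Poly_Mapping.lookup \<alpha> j = 0" using assms(3)[of j] by simp
    ultimately show "Poly_Mapping.lookup \<nu> j choose Poly_Mapping.lookup \<alpha> j = 1" by simp
  qed
qed (use assms in auto)

lemma splits_iff: "(a,b) \<in> splits \<mu> \<longleftrightarrow> a + b = \<mu>" by (simp add: splits_def)

lemma D2_pascal:
  fixes g :: "mono \<Rightarrow> mono \<Rightarrow> 'b::comm_semiring_1"
  shows "D2 (\<mu> + Poly_Mapping.single i 1) g =
         D2 \<mu> (\<lambda>\<alpha> \<beta>. g (\<alpha> + Poly_Mapping.single i 1) \<beta> + g \<alpha> (\<beta> + Poly_Mapping.single i 1))"
proof -
  define e :: mono where "e = Poly_Mapping.single i 1"
  define L where "L = (Poly_Mapping.lookup :: mono \<Rightarrow> nat \<Rightarrow> nat)"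
  have Le: "L e j = (if j = i then 1 else 0)" for j by (simp add: L_def e_def lookup_single when_def)
  have Ladd: "L (a + b) j = L a j + L b j" for a b j by (simp add: L_def lookup_add)
  have Lminus: "L (a - b) j = L a j - L b j" for a b j by (simp add: L_def lookup_minus)
  have eqI: "a = b" if "\<And>j. L a j = L b j" for a b using that by (simp add: L_def poly_mapping_eqI)
  define K where "K = insert i (Poly_Mapping.keys \<mu>)"
  have fK: "finite K" by (simp add: K_def)
  define c1 where "c1 \<alpha> = (if L \<alpha> i > 0 then bcoef \<mu> (\<alpha> - e) else 0)" for \<alpha>
  define c2 where "c2 \<alpha> \<beta> = (if L \<beta> i > 0 then bcoef \<mu> \<alpha> else 0)" for \<alpha> \<beta>
  have coef: "bcoef (\<mu> + e) \<alpha> = c1 \<alpha> + c2 \<alpha> \<beta>" if ab: "\<alpha> + \<beta> = \<mu> + e" for \<alpha> \<beta>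
  proof -
    define P' where "P' = (\<Prod>j\<in>K-{i}. L \<mu> j choose L \<alpha> j)"
    have abj: "L \<alpha> j + L \<beta> j = L \<mu> j + (if j = i then 1 else 0)" for j
      using arg_cong[OF ab, of "\<lambda>x. L x j"] by (simp add: Ladd Le)
    have kme: "Poly_Mapping.keys (\<mu> + e) \<subseteq> K"
      using keys_add[of \<mu> e] by (auto simp: K_def e_def)
    have "bcoef (\<mu> + e) \<alpha> = (\<Prod>j\<in>K. L (\<mu>+e) j choose L \<alpha> j)"
    proof -
      have "L \<alpha> j \<le> L (\<mu>+e) j" for j using abj[of j] by (simp add: Ladd Le)
      then show ?thesis unfolding L_def by (intro bcoef_K[OF fK kme]) (simp add: L_def)
    qed
    also have "\<dots> = (L \<mu> i + 1 choose L \<alpha> i) * (\<Prod>j\<in>K-{i}. L (\<mu>+e) j choose L \<alpha> j)"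
      by (subst prod.remove[of _ i]) (auto simp: fK K_def Ladd Le)
    also have "(\<Prod>j\<in>K-{i}. L (\<mu>+e) j choose L \<alpha> j) = P'"
      unfolding P'_def by (rule prod.cong) (auto simp: Ladd Le)
    finally have A: "bcoef (\<mu> + e) \<alpha> = (L \<mu> i + 1 choose L \<alpha> i) * P'" .
    have B: "c1 \<alpha> = (if L \<alpha> i > 0 then (L \<mu> i choose (L \<alpha> i - 1)) else 0) * P'"
    proof (cases "L \<alpha> i > 0")
      case True
      have "bcoef \<mu> (\<alpha> - e) = (\<Prod>j\<in>K. L \<mu> j choose L (\<alpha> - e) j)"
      proof -
        have "L (\<alpha> - e) j \<le> L \<mu> j" for j using abj[of j] by (simp add: Lminus Le)
        then show ?thesis unfolding L_def by (intro bcoef_K[OF fK]) (auto simp: L_def K_def)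
      qed
      also have "\<dots> = (L \<mu> i choose (L \<alpha> i - 1)) * (\<Prod>j\<in>K-{i}. L \<mu> j choose L (\<alpha> - e) j)"
        by (subst prod.remove[of _ i]) (auto simp: fK K_def Lminus Le)
      also have "(\<Prod>j\<in>K-{i}. L \<mu> j choose L (\<alpha> - e) j) = P'"
        unfolding P'_def by (rule prod.cong) (auto simp: Lminus Le)
      finally show ?thesis using True by (simp add: c1_def)
    qed (simp add: c1_def)
    have C: "c2 \<alpha> \<beta> = (L \<mu> i choose L \<alpha> i) * P'"
    proof (cases "L \<beta> i > 0")
      case True
      have "bcoef \<mu> \<alpha> = (\<Prod>j\<in>K. L \<mu> j choose L \<alpha> j)"
      proof -
        have "L \<alpha> j \<le> L \<mu> j" for j using abj[of j] True by (cases "j = i") auto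
        then show ?thesis unfolding L_def by (intro bcoef_K[OF fK]) (auto simp: L_def K_def)
      qed
      also have "\<dots> = (L \<mu> i choose L \<alpha> i) * P'"
        unfolding P'_def by (subst prod.remove[of _ i]) (auto simp: fK K_def)
      finally show ?thesis using True by (simp add: c2_def)
    next
      case False
      then have "L \<alpha> i = L \<mu> i + 1" using abj[of i] by simp
      then show ?thesis using False by (simp add: c2_def)
    qed
    show ?thesis
    proof (cases "L \<alpha> i")
      case 0 then show ?thesis by (simp add: A B C)
    next
      case (Suc k) then show ?thesis by (simp add: A B C algebra_simps)
    qed
  qed
  have "D2 (\<mu> + e) g = (\<Sum>(\<alpha>,\<beta>)\<in>splits (\<mu>+e). of_nat (c1 \<alpha>) * g \<alpha> \<beta> + of_nat (c2 \<alpha> \<beta>) * g \<alpha> \<beta>)"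
    unfolding D2_def by (rule sum.cong) (auto simp: splits_iff coef algebra_simps)
  also have "\<dots> = (\<Sum>(\<alpha>,\<beta>)\<in>splits (\<mu>+e). of_nat (c1 \<alpha>) * g \<alpha> \<beta>) + (\<Sum>(\<alpha>,\<beta>)\<in>splits (\<mu>+e). of_nat (c2 \<alpha> \<beta>) * g \<alpha> \<beta>)"
    by (simp add: sum.distrib case_prod_unfold)
  finally have E0: "D2 (\<mu> + e) g = (\<Sum>(\<alpha>,\<beta>)\<in>splits (\<mu>+e). of_nat (c1 \<alpha>) * g \<alpha> \<beta>) + (\<Sum>(\<alpha>,\<beta>)\<in>splits (\<mu>+e). of_nat (c2 \<alpha> \<beta>) * g \<alpha> \<beta>)" .
  have abjg: "\<And>j. L a j + L b j = L \<mu> j + (if j = i then 1 else 0)" if "a + b = \<mu> + e" for a b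
  proof -
    fix j show "L a j + L b j = L \<mu> j + (if j = i then 1 else 0)"
      using arg_cong[OF that, of "\<lambda>x. L x j"] by (simp add: Ladd Le)
  qed
  have P1: "(\<Sum>(\<alpha>,\<beta>)\<in>splits (\<mu>+e). of_nat (c1 \<alpha>) * g \<alpha> \<beta>) =
     (\<Sum>(\<alpha>,\<beta>)\<in>{x\<in>splits (\<mu>+e). 0 < L (fst x) i}. of_nat (c1 \<alpha>) * g \<alpha> \<beta>)"
    by (rule sum.mono_neutral_right) (auto simp: finite_splits c1_def split: if_split_asm)
  also have "\<dots> = (\<Sum>(\<alpha>,\<beta>)\<in>splits \<mu>. of_nat (bcoef \<mu> \<alpha>) * g (\<alpha> + e) \<beta>)"
  proof (rule sum.reindex_bij_witness[where j="\<lambda>(a,b). (a - e, b)" and i="\<lambda>(a,b). (a + e, b)"])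
    fix x assume x: "x \<in> {x\<in>splits (\<mu>+e). 0 < L (fst x) i}"
    then obtain a b where ab: "x = (a,b)" "a + b = \<mu> + e" "0 < L a i" using x by (cases x) (auto simp: splits_iff)
    have aj: "L a j + L b j = L \<mu> j + (if j = i then 1 else 0)" for j using abjg[OF ab(2)] by blast
    show "(case (case x of (a, b) \<Rightarrow> (a - e, b)) of (a, b) \<Rightarrow> (a + e, b)) = x"
      using ab by (auto intro!: eqI simp: Ladd Lminus Le)
    show "(case x of (a, b) \<Rightarrow> (a - e, b)) \<in> splits \<mu>"
      using ab aj by (auto intro!: eqI simp: splits_iff Ladd Lminus Le split: if_splits)
    show "(case (case x of (a, b) \<Rightarrow> (a - e, b)) of (\<alpha>, \<beta>) \<Rightarrow> of_nat (bcoef \<mu> \<alpha>) * g (\<alpha> + e) \<beta>) =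
          (case x of (\<alpha>, \<beta>) \<Rightarrow> of_nat (c1 \<alpha>) * g \<alpha> \<beta>)"
    proof -
      have "a - e + e = a" using ab by (auto intro!: eqI simp: Ladd Lminus Le)
      then show ?thesis using ab by (simp add: c1_def)
    qed
  next
    fix y assume "y \<in> splits \<mu>"
    then obtain a b where ab: "y = (a,b)" "a + b = \<mu>" by (cases y) (auto simp: splits_iff)
    show "(case (case y of (a, b) \<Rightarrow> (a + e, b)) of (a, b) \<Rightarrow> (a - e, b)) = y"
      using ab by (auto intro!: eqI simp: Ladd Lminus Le)
    show "(case y of (a, b) \<Rightarrow> (a + e, b)) \<in> {x \<in> splits (\<mu> + e). 0 < L (fst x) i}"
      using ab by (auto simp: splits_iff Ladd Le add_ac)
  qed
  finally have S1: "(\<Sum>(\<alpha>,\<beta>)\<in>splits (\<mu>+e). of_nat (c1 \<alpha>) * g \<alpha> \<beta>) = (\<Sum>(\<alpha>,\<beta>)\<in>splits \<mu>. of_nat (bcoef \<mu> \<alpha>) * g (\<alpha> + e) \<beta>)" .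
  have "(\<Sum>(\<alpha>,\<beta>)\<in>splits (\<mu>+e). of_nat (c2 \<alpha> \<beta>) * g \<alpha> \<beta>) =
     (\<Sum>(\<alpha>,\<beta>)\<in>{x\<in>splits (\<mu>+e). 0 < L (snd x) i}. of_nat (c2 \<alpha> \<beta>) * g \<alpha> \<beta>)"
    by (rule sum.mono_neutral_right) (auto simp: finite_splits c2_def split: if_split_asm)
  also have "\<dots> = (\<Sum>(\<alpha>,\<beta>)\<in>splits \<mu>. of_nat (bcoef \<mu> \<alpha>) * g \<alpha> (\<beta> + e))"
  proof (rule sum.reindex_bij_witness[where j="\<lambda>(a,b). (a, b - e)" and i="\<lambda>(a,b). (a, b + e)"])
    fix x assume x: "x \<in> {x\<in>splits (\<mu>+e). 0 < L (snd x) i}"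
    then obtain a b where ab: "x = (a,b)" "a + b = \<mu> + e" "0 < L b i" using x by (cases x) (auto simp: splits_iff)
    have aj: "L a j + L b j = L \<mu> j + (if j = i then 1 else 0)" for j using abjg[OF ab(2)] by blast
    show "(case (case x of (a, b) \<Rightarrow> (a, b - e)) of (a, b) \<Rightarrow> (a, b + e)) = x"
      using ab by (auto intro!: eqI simp: Ladd Lminus Le)
    show "(case x of (a, b) \<Rightarrow> (a, b - e)) \<in> splits \<mu>"
      using ab aj by (auto intro!: eqI simp: splits_iff Ladd Lminus Le split: if_splits)
    show "(case (case x of (a, b) \<Rightarrow> (a, b - e)) of (\<alpha>, \<beta>) \<Rightarrow> of_nat (bcoef \<mu> \<alpha>) * g \<alpha> (\<beta> + e)) =
          (case x of (\<alpha>, \<beta>) \<Rightarrow> of_nat (c2 \<alpha> \<beta>) * g \<alpha> \<beta>)"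
    proof -
      have "b - e + e = b" using ab by (auto intro!: eqI simp: Ladd Lminus Le)
      then show ?thesis using ab by (simp add: c2_def)
    qed
  next
    fix y assume "y \<in> splits \<mu>"
    then obtain a b where ab: "y = (a,b)" "a + b = \<mu>" by (cases y) (auto simp: splits_iff)
    show "(case (case y of (a, b) \<Rightarrow> (a, b + e)) of (a, b) \<Rightarrow> (a, b - e)) = y"
      using ab by (auto intro!: eqI simp: Ladd Lminus Le)
    show "(case y of (a, b) \<Rightarrow> (a, b + e)) \<in> {x \<in> splits (\<mu> + e). 0 < L (snd x) i}"
      using ab by (auto simp: splits_iff Ladd Le add_ac)
  qed
  finally have S2: "(\<Sum>(\<alpha>,\<beta>)\<in>splits (\<mu>+e). of_nat (c2 \<alpha> \<beta>) * g \<alpha> \<beta>) = (\<Sum>(\<alpha>,\<beta>)\<in>splits \<mu>. of_nat (bcoef \<mu> \<alpha>) * g \<alpha> (\<beta> + e))" .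
  have "D2 (\<mu> + e) g = D2 \<mu> (\<lambda>\<alpha> \<beta>. g (\<alpha> + e) \<beta> + g \<alpha> (\<beta> + e))"
    unfolding E0 S1 S2 by (simp add: D2_def sum.distrib[symmetric] case_prod_unfold algebra_simps)
  then show ?thesis unfolding e_def .
qed



lemma splits_0: "splits 0 = {(0,0)}"
  by (auto simp: splits_def poly_mapping_eq_iff lookup_add fun_eq_iff)

lemma D2_0: "D2 0 g = g 0 0" by (simp add: D2_def splits_0 bcoef_def)

lemma bridge:
  fixes g :: "mono \<Rightarrow> mono \<Rightarrow> 'b::comm_semiring_1"
  assumes "finite P"
  shows "D2 (mn w P) g = (\<Sum>S\<in>Pow P. g (mn w S) (mn w (P - S)))"
  using assms
proof (induction P arbitrary: g rule: finite_induct)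
  case empty then show ?case by (simp add: D2_0)
next
  case (insert x P)
  define e where "e = Poly_Mapping.single (w x) (1::nat)"
  have fin: "finite S" if "S \<in> Pow P" for S using insert(1) that finite_subset by blast
  have "D2 (mn w (insert x P)) g = D2 (mn w P + e) g"
    using insert by (simp add: mn_insert e_def add.commute)
  also have "\<dots> = D2 (mn w P) (\<lambda>\<alpha> \<beta>. g (\<alpha> + e) \<beta> + g \<alpha> (\<beta> + e))"
    unfolding e_def by (rule D2_pascal)
  also have "\<dots> = (\<Sum>S\<in>Pow P. g (mn w S + e) (mn w (P - S)) + g (mn w S) (mn w (P - S) + e))"
    by (rule insert.IH)
  also have "\<dots> = (\<Sum>S\<in>Pow P. g (mn w (insert x S)) (mn w (insert x P - insert x S))) +
                  (\<Sum>S\<in>Pow P. g (mn w S) (mn w (insert x P - S)))"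
  proof -
    have 1: "mn w (insert x S) = mn w S + e" if "S \<in> Pow P" for S
    proof -
      have "x \<notin> S" using that insert(2) by auto
      then show ?thesis using fin[OF that] by (simp add: mn_insert e_def add.commute)
    qed
    have 2: "insert x P - insert x S = P - S" if "S \<in> Pow P" for S using that insert(2) by auto
    have 3: "mn w (insert x P - S) = mn w (P - S) + e" if "S \<in> Pow P" for S
    proof -
      have "insert x P - S = insert x (P - S)" using that insert(2) by auto
      then show ?thesis using insert(1,2) by (simp add: mn_insert e_def add.commute)
    qed
    show ?thesis unfolding sum.distrib
      by (intro arg_cong2[where f="(+)"] sum.cong refl) (simp_all only: 1 2 3)
  qed
  also have "\<dots> = (\<Sum>S\<in>Pow (insert x P). g (mn w S) (mn w (insert x P - S)))"
  proof -
    have "Pow (insert x P) = Pow P \<union> insert x ` Pow P" by (rule Pow_insert)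
    moreover have "Pow P \<inter> insert x ` Pow P = {}" using insert(2) by auto
    moreover have "inj_on (insert x) (Pow P)" using insert(2) by (auto simp: inj_on_def)
    ultimately show ?thesis using insert(1)
      by (simp add: sum.union_disjoint sum.reindex add.commute)
  qed
  finally show ?case .
qed

definition col :: "nat set \<Rightarrow> nat \<Rightarrow> (nat \<Rightarrow> nat) set" where
  "col P k = {c. (\<forall>x\<in>P. c x < k) \<and> (\<forall>x. x \<notin> P \<longrightarrow> c x = 0)}"

definition cls :: "nat set \<Rightarrow> (nat \<Rightarrow> nat) \<Rightarrow> nat \<Rightarrow> nat set" where
  "cls P c j = {x\<in>P. c x = j}"

definition mrg :: "nat \<Rightarrow> nat \<Rightarrow> (nat \<Rightarrow> nat) \<Rightarrow> nat \<Rightarrow> nat" where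
  "mrg k j d = (\<lambda>x. if d x = k then j else d x)"

lemma finite_col: "finite P \<Longrightarrow> finite (col P k)"
proof -
  assume "finite P"
  then have "finite {f. \<forall>x. (x \<in> P \<longrightarrow> f x \<in> {..<k}) \<and> (x \<notin> P \<longrightarrow> f x = 0)}"
    by (intro finite_set_of_finite_funs) auto
  moreover have "col P k = {f. \<forall>x. (x \<in> P \<longrightarrow> f x \<in> {..<k}) \<and> (x \<notin> P \<longrightarrow> f x = 0)}"
    by (auto simp: col_def)
  ultimately show ?thesis by simp
qed

lemma cls_subset: "cls P c j \<subseteq> P" by (auto simp: cls_def)
lemma finite_cls: "finite P \<Longrightarrow> finite (cls P c j)" by (auto simp: cls_def)

lemma cls_mrg: "i \<noteq> k \<Longrightarrow> cls P (mrg k j d) i = (if i = j then cls P d j \<union> cls P d k else cls P d i)"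
  by (auto simp: cls_def mrg_def)

lemma refine:
  assumes "finite P" "j < k"
  shows "(\<Sum>c\<in>col P k. \<Sum>S\<in>Pow (cls P c j). F c S) = (\<Sum>d\<in>col P (Suc k). F (mrg k j d) (cls P d k))"
proof -
  have fin: "finite (col P k)" using assms finite_col by blast
  have "(\<Sum>c\<in>col P k. \<Sum>S\<in>Pow (cls P c j). F c S) = (\<Sum>p\<in>Sigma (col P k) (\<lambda>c. Pow (cls P c j)). F (fst p) (snd p))"
    using fin assms(1) by (subst sum.Sigma) (auto simp: finite_cls case_prod_unfold)
  also have "\<dots> = (\<Sum>d\<in>col P (Suc k). F (mrg k j d) (cls P d k))"
  proof (rule sum.reindex_bij_witness[where i="\<lambda>d. (mrg k j d, cls P d k)" and j="\<lambda>p x. if x \<in> snd p then k else fst p x"])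
    fix p assume p: "p \<in> Sigma (col P k) (\<lambda>c. Pow (cls P c j))"
    then obtain c S where cS: "p = (c,S)" "c \<in> col P k" "S \<subseteq> cls P c j" by auto
    have ck: "c x \<noteq> k" for x using cS(2) assms(2) by (cases "x \<in> P") (auto simp: col_def)
    have m: "mrg k j (\<lambda>x. if x \<in> S then k else c x) = c"
      using cS(3) ck by (auto simp: mrg_def cls_def fun_eq_iff)
    have cl: "cls P (\<lambda>x. if x \<in> S then k else c x) k = S"
      using cS(3) ck by (auto simp: cls_def)
    show "(mrg k j (\<lambda>x. if x \<in> snd p then k else fst p x), cls P (\<lambda>x. if x \<in> snd p then k else fst p x) k) = p"
      unfolding cS(1) fst_conv snd_conv m cl by (rule refl)
    show "(\<lambda>x. if x \<in> snd p then k else fst p x) \<in> col P (Suc k)"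
      using cS by (auto simp: col_def cls_def)
    show "F (mrg k j (\<lambda>x. if x \<in> snd p then k else fst p x)) (cls P (\<lambda>x. if x \<in> snd p then k else fst p x) k) = F (fst p) (snd p)"
      unfolding cS(1) fst_conv snd_conv m cl by (rule refl)
  next
    fix d assume d: "d \<in> col P (Suc k)"
    have dk: "d x = k \<Longrightarrow> x \<in> P" for x using d assms(2) by (auto simp: col_def)
    show "(\<lambda>x. if x \<in> snd (mrg k j d, cls P d k) then k else fst (mrg k j d, cls P d k) x) = d"
      using dk by (auto simp: mrg_def cls_def fun_eq_iff)
    show "(mrg k j d, cls P d k) \<in> Sigma (col P k) (\<lambda>c. Pow (cls P c j))"
      using d assms(2) by (auto simp: col_def cls_def mrg_def less_Suc_eq)
  qed
  finally show ?thesis .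
qed

lemma col_1: "col P (Suc 0) = {\<lambda>x. 0}" by (auto simp: col_def fun_eq_iff)

lemma pow_col:
  assumes "finite P"
  shows "(\<Sum>S\<in>Pow P. F S) = (\<Sum>d\<in>col P 2. F (cls P d 1))"
proof -
  have "(\<Sum>S\<in>Pow P. F S) = (\<Sum>c\<in>col P 1. \<Sum>S\<in>Pow (cls P c 0). F S)"
    by (simp add: col_1 cls_def)
  also have "\<dots> = (\<Sum>d\<in>col P (Suc 1). F (cls P d 1))"
    by (rule refine[OF assms]) simp
  finally show ?thesis by (simp add: numeral_2_eq_2)
qed

lemma col_compl: "c \<in> col P 2 \<Longrightarrow> P - cls P c 1 = cls P c 0"
  by (auto simp: col_def cls_def)

lemma col_compl': "c \<in> col P 2 \<Longrightarrow> P - cls P c (Suc 0) = cls P c 0"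
  by (auto simp: col_def cls_def)

lemma bridge_col:
  fixes g :: "mono \<Rightarrow> mono \<Rightarrow> 'b::comm_semiring_1"
  assumes "finite P"
  shows "D2 (mn w P) g = (\<Sum>c\<in>col P 2. g (mn w (cls P c 1)) (mn w (cls P c 0)))"
  using assms by (simp add: bridge pow_col col_compl' cong: sum.cong)

lemma permute:
  assumes "\<And>y. y < k \<Longrightarrow> \<pi> y < k" "\<And>y. y < k \<Longrightarrow> \<rho> y < k"
    "\<And>y. y < k \<Longrightarrow> \<pi> (\<rho> y) = y" "\<And>y. y < k \<Longrightarrow> \<rho> (\<pi> y) = y"
  shows "(\<Sum>c\<in>col P k. F c) = (\<Sum>c\<in>col P k. F (\<lambda>x. if x \<in> P then \<pi> (c x) else 0))"
proof (rule sum.reindex_bij_witness[where j="\<lambda>c x. if x \<in> P then \<rho> (c x) else 0" and i="\<lambda>c x. if x \<in> P then \<pi> (c x) else 0"])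
  fix c assume c: "c \<in> col P k"
  show "(\<lambda>x. if x \<in> P then \<rho> (if x \<in> P then \<pi> (c x) else 0) else 0) = c"
    using c assms by (auto simp: col_def fun_eq_iff)
  show "(\<lambda>x. if x \<in> P then \<pi> (c x) else 0) \<in> col P k"
    using c assms by (auto simp: col_def)
next
  fix c assume c: "c \<in> col P k"
  have e: "(\<lambda>x. if x \<in> P then \<pi> (if x \<in> P then \<rho> (c x) else 0) else 0) = c"
    using c assms by (auto simp: col_def fun_eq_iff)
  then show "(\<lambda>x. if x \<in> P then \<pi> (if x \<in> P then \<rho> (c x) else 0) else 0) = c" .
  show "(\<lambda>x. if x \<in> P then \<rho> (c x) else 0) \<in> col P k"
    using c assms by (auto simp: col_def)
  show "F (\<lambda>x. if x \<in> P then \<pi> (if x \<in> P then \<rho> (c x) else 0) else 0) = F c"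
    unfolding e ..
qed



lemma D2_cong: "(\<And>a b. a + b = \<mu> \<Longrightarrow> f a b = g a b) \<Longrightarrow> D2 \<mu> f = D2 \<mu> g"
  unfolding D2_def by (rule sum.cong) (auto simp: splits_def)

lemma D2_add: "D2 \<mu> (\<lambda>a b. f a b + g a b) = D2 \<mu> f + D2 \<mu> g"
  by (simp add: D2_def sum.distrib distrib_left case_prod_unfold)

lemma D2_cmult_left: "k * D2 \<mu> g = D2 \<mu> (\<lambda>a b. k * g a b)"
  by (simp add: D2_def sum_distrib_left case_prod_unfold mult_ac)

lemma D2_cmult_right: "D2 \<mu> g * k = D2 \<mu> (\<lambda>a b. g a b * k)"
  by (simp add: D2_def sum_distrib_right case_prod_unfold mult.assoc)

lemma D2_sum: "D2 \<mu> (\<lambda>a b. \<Sum>i\<in>I. f i a b) = (\<Sum>i\<in>I. D2 \<mu> (f i))"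
  unfolding D2_def case_prod_unfold sum_distrib_left by (rule sum.swap)

lemma D2_zero: "D2 \<mu> (\<lambda>a b. 0) = 0" by (simp add: D2_def)

lemma hom_of_nat:
  assumes "\<And>x y. h (x + y) = h x + h y" "h 0 = 0"
  shows "h (of_nat n * x) = of_nat n * h x"
  by (induction n) (simp_all add: assms algebra_simps)

lemma hom_sum:
  assumes "\<And>x y. h (x + y) = h x + h y" "h 0 = 0"
  shows "h (sum f A) = (\<Sum>a\<in>A. h (f a))"
  by (induction A rule: infinite_finite_induct) (simp_all add: assms)

lemma D2_hom:
  fixes h :: "'b::comm_semiring_1 \<Rightarrow> 'c::comm_semiring_1"
  assumes "\<And>x y. h (x + y) = h x + h y" "h 0 = 0"
  shows "h (D2 \<mu> g) = D2 \<mu> (\<lambda>a b. h (g a b))"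
  unfolding D2_def by (simp add: hom_sum[of h, OF assms] hom_of_nat[of h, OF assms] case_prod_unfold)

lemma D2_fubini: "D2 \<mu> (\<lambda>a b. D2 \<nu> (g a b)) = D2 \<nu> (\<lambda>c d. D2 \<mu> (\<lambda>a b. g a b c d))"
proof -
  have "D2 \<mu> (\<lambda>a b. D2 \<nu> (g a b)) = (\<Sum>x\<in>splits \<mu>. \<Sum>y\<in>splits \<nu>. of_nat (bcoef \<mu> (fst x)) * (of_nat (bcoef \<nu> (fst y)) * g (fst x) (snd x) (fst y) (snd y)))"
    by (simp add: D2_def case_prod_unfold sum_distrib_left)
  also have "\<dots> = (\<Sum>y\<in>splits \<nu>. \<Sum>x\<in>splits \<mu>. of_nat (bcoef \<mu> (fst x)) * (of_nat (bcoef \<nu> (fst y)) * g (fst x) (snd x) (fst y) (snd y)))"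
    by (rule sum.swap)
  also have "\<dots> = D2 \<nu> (\<lambda>c d. D2 \<mu> (\<lambda>a b. g a b c d))"
    by (simp add: D2_def case_prod_unfold sum_distrib_left mult_ac)
  finally show ?thesis .
qed

lemma bcoef_0: "bcoef \<mu> 0 = 1" by (simp add: bcoef_def)

lemma D2_counit_left:
  fixes g :: "mono \<Rightarrow> 'b::comm_ring_1"
  shows "D2 \<mu> (\<lambda>a b. counit a * g b) = g \<mu>"
proof -
  have "D2 \<mu> (\<lambda>a b. counit a * g b) = (\<Sum>x\<in>{(0,\<mu>)}. of_nat (bcoef \<mu> (fst x)) * (counit (fst x) * g (snd x)))"
    unfolding D2_def case_prod_unfold
    by (rule sum.mono_neutral_right) (use finite_splits[of \<mu>] in \<open>auto simp: splits_def counit_def\<close>)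
  then show ?thesis by (simp add: bcoef_0 counit_def)
qed

lemma D2_counit_right:
  fixes g :: "mono \<Rightarrow> 'b::comm_ring_1"
  shows "D2 \<mu> (\<lambda>a b. g a * counit b) = g \<mu>"
proof -
  have "D2 \<mu> (\<lambda>a b. g a * counit b) = (\<Sum>x\<in>{(\<mu>,0)}. of_nat (bcoef \<mu> (fst x)) * (g (fst x) * counit (snd x)))"
    unfolding D2_def case_prod_unfold
    by (rule sum.mono_neutral_right) (use finite_splits[of \<mu>] in \<open>auto simp: splits_def counit_def\<close>)
  moreover have "bcoef \<mu> \<mu> = 1" by (simp add: bcoef_def)
  ultimately show ?thesis by (simp add: counit_def)
qed

lemma bridge_cls:
  fixes g :: "mono \<Rightarrow> mono \<Rightarrow> 'b::comm_semiring_1"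
  assumes "finite P"
  shows "D2 (mn w (cls P c j)) g = (\<Sum>T\<in>Pow (cls P c j). g (mn w T) (mn w (cls P c j - T)))"
  using assms by (simp add: bridge finite_cls)

lemma cls_union_diff: "j \<noteq> k \<Longrightarrow> cls P d j \<union> cls P d k - cls P d k = cls P d j"
  by (auto simp: cls_def)

lemma start_col: "mn w P = mn w (cls P (\<lambda>x. 0) 0)" by (simp add: cls_def)

lemma start_sum: "F (mn w P) = (\<Sum>c\<in>col P 1. F (mn w (cls P c 0)))"
  by (simp add: col_1 cls_def)

lemma refine_under:
  assumes "finite P" "j < k"
  shows "(\<Sum>c\<in>col P k. \<Sum>y\<in>B. \<Sum>S\<in>Pow (cls P c j). F c y S) = (\<Sum>d\<in>col P (Suc k). \<Sum>y\<in>B. F (mrg k j d) y (cls P d k))"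
proof -
  have "(\<Sum>c\<in>col P k. \<Sum>y\<in>B. \<Sum>S\<in>Pow (cls P c j). F c y S) = (\<Sum>c\<in>col P k. \<Sum>S\<in>Pow (cls P c j). \<Sum>y\<in>B. F c y S)"
    by (rule sum.cong[OF refl]) (rule sum.swap)
  also have "\<dots> = (\<Sum>d\<in>col P (Suc k). \<Sum>y\<in>B. F (mrg k j d) y (cls P d k))"
    by (rule refine[OF assms])
  finally show ?thesis .
qed

lemma refine_under2:
  assumes "finite P" "j < k"
  shows "(\<Sum>c\<in>col P k. \<Sum>y\<in>B. \<Sum>z\<in>C. \<Sum>S\<in>Pow (cls P c j). F c y z S) = (\<Sum>d\<in>col P (Suc k). \<Sum>y\<in>B. \<Sum>z\<in>C. F (mrg k j d) y z (cls P d k))"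
proof -
  have "(\<Sum>c\<in>col P k. \<Sum>y\<in>B. \<Sum>z\<in>C. \<Sum>S\<in>Pow (cls P c j). F c y z S) = (\<Sum>c\<in>col P k. \<Sum>y\<in>B. \<Sum>S\<in>Pow (cls P c j). \<Sum>z\<in>C. F c y z S)"
    by (intro sum.cong refl) (rule sum.swap)
  also have "\<dots> = (\<Sum>d\<in>col P (Suc k). \<Sum>y\<in>B. \<Sum>z\<in>C. F (mrg k j d) y z (cls P d k))"
    by (rule refine_under[OF assms])
  finally show ?thesis .
qed

lemma perm_cls:
  assumes "c \<in> col P k" "\<And>y. y < k \<Longrightarrow> \<pi> y = i \<longleftrightarrow> y = \<rho>"
  shows "cls P (\<lambda>x. if x \<in> P then \<pi> (c x) else 0) i = cls P c \<rho>"
  using assms by (auto simp: cls_def col_def)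

lemmas flat_simps = cls_mrg cls_union_diff bridge_cls

lemma D2_swap:
  fixes g :: "mono \<Rightarrow> mono \<Rightarrow> 'b::comm_semiring_1"
  shows "D2 \<mu> g = D2 \<mu> (\<lambda>a b. g b a)"
proof -
  obtain w n where \<mu>: "mn w {..<n} = \<mu>" using mono_rep by blast
  define P where "P = {..<n::nat}"
  have fP: "finite P" by (simp add: P_def)
  have "D2 \<mu> g = (\<Sum>c\<in>col P 2. g (mn w (cls P c 1)) (mn w (cls P c 0)))"
    using fP by (simp add: bridge_col P_def \<mu>[symmetric])
  also have "\<dots> = (\<Sum>c\<in>col P 2. g (mn w (cls P (\<lambda>x. if x \<in> P then 1 - c x else 0) 1)) (mn w (cls P (\<lambda>x. if x \<in> P then 1 - c x else 0) 0)))"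
    by (rule permute[where \<rho>="\<lambda>y. 1 - y"]) auto
  also have "\<dots> = (\<Sum>c\<in>col P 2. g (mn w (cls P c 0)) (mn w (cls P c 1)))"
    by (rule sum.cong[OF refl], subst perm_cls[where \<rho>=0], assumption, force,
        subst perm_cls[where \<rho>=1], assumption, force, rule refl)
  also have "\<dots> = D2 \<mu> (\<lambda>a b. g b a)"
    using fP by (simp add: bridge_col P_def \<mu>[symmetric])
  finally show ?thesis .
qed

fun find_idx :: "nat list \<Rightarrow> nat \<Rightarrow> nat" where
  "find_idx [] i = 0"
| "find_idx (x#xs) i = (if x = i then 0 else Suc (find_idx xs i))"

lemma find_idx_nth: "i \<in> set p \<Longrightarrow> p ! find_idx p i = i"
  by (induction p) auto

lemma find_idx_less: "i \<in> set p \<Longrightarrow> find_idx p i < length p"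
  by (induction p) auto

lemma find_idx_of_nth: "distinct p \<Longrightarrow> y < length p \<Longrightarrow> find_idx p (p ! y) = y"
proof (induction p arbitrary: y)
  case (Cons x xs)
  then show ?case by (cases y) (auto simp: nth_mem)
qed simp

lemma set_perm:
  assumes "distinct p" "\<forall>x\<in>set p. x < length p"
  shows "set p = {..<length p}"
proof -
  have "set p \<subseteq> {..<length p}" using assms(2) by auto
  moreover have "card (set p) = card {..<length p}" using assms(1) by (simp add: distinct_card)
  ultimately show ?thesis by (simp add: card_subset_eq)
qed

lemma permute_list:
  assumes "length p = k" "distinct p" "\<forall>x\<in>set p. x < length p"
  shows "(\<Sum>c\<in>col P k. F c) = (\<Sum>c\<in>col P k. F (\<lambda>x. if x \<in> P then p ! (c x) else 0))"
proof (rule permute[where \<rho>="find_idx p"])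
  have sp: "set p = {..<k}" using set_perm[OF assms(2,3)] assms(1) by simp
  fix y assume y: "y < k"
  show "p ! y < k" using y assms(1) sp nth_mem by blast
  show "find_idx p y < k" using y sp find_idx_less assms(1) by blast
  show "p ! find_idx p y = y" using y sp find_idx_nth by blast
  show "find_idx p (p ! y) = y" using y assms find_idx_of_nth by blast
qed

lemma perm_cls_list:
  assumes "c \<in> col P k" "length p = k" "distinct p" "\<forall>x\<in>set p. x < length p" "i < k"
  shows "cls P (\<lambda>x. if x \<in> P then p ! (c x) else 0) i = cls P c (find_idx p i)"
proof (rule perm_cls[OF assms(1)])
  have sp: "set p = {..<k}" using set_perm[OF assms(3,4)] assms(2) by simp
  fix y assume y: "y < k"
  show "p ! y = i \<longleftrightarrow> y = find_idx p i"
    using y sp assms find_idx_nth find_idx_of_nth by fastforce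
qed

lemma D2_coassoc:
  fixes g :: "mono \<Rightarrow> mono \<Rightarrow> mono \<Rightarrow> 'b::comm_semiring_1"
  shows "D2 \<mu> (\<lambda>a x. D2 a (\<lambda>b c. g b c x)) = D2 \<mu> (\<lambda>b y. D2 y (\<lambda>c x. g b c x))"
proof -
  obtain w n where \<mu>: "mn w {..<n} = \<mu>" using mono_rep by blast
  define P where "P = {..<n::nat}"
  have fP: "finite P" by (simp add: P_def)
  have L: "D2 \<mu> (\<lambda>a x. D2 a (\<lambda>b c. g b c x)) = (\<Sum>d\<in>col P 3. g (mn w (cls P d 2)) (mn w (cls P d 1)) (mn w (cls P d 0)))"
    using fP by (simp add: bridge_col P_def \<mu>[symmetric] flat_simps refine numeral_3_eq_3)
  have R: "D2 \<mu> (\<lambda>b y. D2 y (\<lambda>c x. g b c x)) = (\<Sum>d\<in>col P 3. g (mn w (cls P d 1)) (mn w (cls P d 2)) (mn w (cls P d 0)))"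
    using fP by (simp add: bridge_col P_def \<mu>[symmetric] flat_simps refine numeral_3_eq_3)
  have "(\<Sum>d\<in>col P 3. g (mn w (cls P d 2)) (mn w (cls P d 1)) (mn w (cls P d 0))) =
        (\<Sum>d\<in>col P 3. g (mn w (cls P (\<lambda>x. if x \<in> P then [0,2,1] ! (d x) else 0) 2))
           (mn w (cls P (\<lambda>x. if x \<in> P then [0,2,1] ! (d x) else 0) 1)) (mn w (cls P (\<lambda>x. if x \<in> P then [0,2,1] ! (d x) else 0) 0)))"
    by (rule permute_list) auto
  also have "\<dots> = (\<Sum>d\<in>col P 3. g (mn w (cls P d 1)) (mn w (cls P d 2)) (mn w (cls P d 0)))"
    by (rule sum.cong[OF refl]) (simp add: perm_cls_list numeral_2_eq_2)
  finally show ?thesis using L R by simp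
qed



lemma pow_union:
  assumes "finite P" "finite Q" "P \<inter> Q = {}"
  shows "(\<Sum>S\<in>Pow (P \<union> Q). F S) = (\<Sum>S1\<in>Pow P. \<Sum>S2\<in>Pow Q. F (S1 \<union> S2))"
proof -
  have "(\<Sum>S1\<in>Pow P. \<Sum>S2\<in>Pow Q. F (S1 \<union> S2)) = (\<Sum>p\<in>Pow P \<times> Pow Q. F (fst p \<union> snd p))"
    by (simp add: sum.cartesian_product case_prod_unfold)
  also have "\<dots> = (\<Sum>S\<in>Pow (P \<union> Q). F S)"
    by (rule sum.reindex_bij_witness[where i="\<lambda>S. (S \<inter> P, S \<inter> Q)" and j="\<lambda>p. fst p \<union> snd p"])
       (use assms(3) in auto)
  finally show ?thesis by simp
qed

lemma D2_mult:
  fixes g :: "mono \<Rightarrow> mono \<Rightarrow> 'b::comm_semiring_1"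
  shows "D2 (\<mu> + \<nu>) g = D2 \<mu> (\<lambda>a1 a2. D2 \<nu> (\<lambda>b1 b2. g (a1 + b1) (a2 + b2)))"
proof -
  obtain w n where \<mu>: "mn w {..<n} = \<mu>" using mono_rep by blast
  obtain w' Q where Q: "finite Q" "{..<n} \<inter> Q = {}" "\<forall>x\<in>{..<n}. w' x = w x" "mn w' Q = \<nu>"
    using mono_extend[of "{..<n}" w \<nu>] by blast
  define P where "P = {..<n}"
  have fP: "finite P" by (simp add: P_def)
  have \<mu>': "mn w' P = \<mu>" using \<mu> Q(3) by (metis P_def mn_cong)
  have fin: "finite S" if "S \<in> Pow A" "finite A" for S A using that finite_subset by blast
  have "D2 (\<mu> + \<nu>) g = D2 (mn w' (P \<union> Q)) g"
    using \<mu>' Q(4) mn_union[OF fP Q(1)] Q(2) by (simp add: P_def)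
  also have "\<dots> = (\<Sum>S\<in>Pow (P \<union> Q). g (mn w' S) (mn w' (P \<union> Q - S)))"
    using fP Q(1) by (simp add: bridge)
  also have "\<dots> = (\<Sum>S1\<in>Pow P. \<Sum>S2\<in>Pow Q. g (mn w' (S1 \<union> S2)) (mn w' (P \<union> Q - (S1 \<union> S2))))"
    by (rule pow_union[OF fP Q(1)]) (use Q(2) P_def in auto)
  also have "\<dots> = (\<Sum>S1\<in>Pow P. \<Sum>S2\<in>Pow Q. g (mn w' S1 + mn w' S2) (mn w' (P - S1) + mn w' (Q - S2)))"
  proof (intro sum.cong refl)
    fix S1 S2 assume s: "S1 \<in> Pow P" "S2 \<in> Pow Q"
    have d: "S1 \<inter> S2 = {}" using s Q(2) P_def by auto
    have e: "P \<union> Q - (S1 \<union> S2) = (P - S1) \<union> (Q - S2)" using s Q(2) P_def by auto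
    have d2: "(P - S1) \<inter> (Q - S2) = {}" using Q(2) P_def by auto
    show "g (mn w' (S1 \<union> S2)) (mn w' (P \<union> Q - (S1 \<union> S2))) = g (mn w' S1 + mn w' S2) (mn w' (P - S1) + mn w' (Q - S2))"
      unfolding e using s fin[OF s(1) fP] fin[OF s(2) Q(1)] fP Q(1) d d2 by (simp add: mn_union)
  qed
  also have "\<dots> = D2 \<mu> (\<lambda>a1 a2. D2 \<nu> (\<lambda>b1 b2. g (a1 + b1) (a2 + b2)))"
    unfolding \<mu>'[symmetric] Q(4)[symmetric] using fP Q(1)
    by (simp add: bridge fin cong: sum.cong)
  finally show ?thesis .
qed

lemma D2_binom:
  fixes x y :: "'b::comm_semiring_1"
  shows "D2 \<mu> (\<lambda>a b. x ^ deg a * y ^ deg b) = (x + y) ^ deg \<mu>"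
proof -
  have "D2 (mn w {..<n}) (\<lambda>a b. x ^ deg a * y ^ deg b) = (x + y) ^ deg (mn w {..<n})" for w n
  proof (induction n)
    case 0 then show ?case by (simp add: D2_0)
  next
    case (Suc n)
    have e: "mn w {..<Suc n} = mn w {..<n} + Poly_Mapping.single (w n) 1"
      by (simp add: lessThan_Suc mn_insert add.commute)
    have "D2 (mn w {..<Suc n}) (\<lambda>a b. x ^ deg a * y ^ deg b) = D2 (mn w {..<n}) (\<lambda>a b. (x + y) * (x ^ deg a * y ^ deg b))"
      unfolding e D2_pascal by (rule D2_cong) (simp add: deg_add algebra_simps)
    also have "\<dots> = (x + y) * D2 (mn w {..<n}) (\<lambda>a b. x ^ deg a * y ^ deg b)" by (simp add: D2_cmult_left)
    also have "\<dots> = (x + y) ^ deg (mn w {..<Suc n})" by (simp add: Suc e deg_add)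
    finally show ?case .
  qed
  then show ?thesis using mono_rep by metis
qed

definition conv :: "(mono \<Rightarrow> mono \<Rightarrow> 'a::comm_ring_1) \<Rightarrow> (mono \<Rightarrow> mono \<Rightarrow> 'a) \<Rightarrow> mono \<Rightarrow> mono \<Rightarrow> 'a" where
  "conv r t \<alpha> \<beta> = D2 \<alpha> (\<lambda>a1 a2. D2 \<beta> (\<lambda>b1 b2. r a1 b1 * t a2 b2))"

definition sc :: "'a::comm_ring_1 \<Rightarrow> (mono \<Rightarrow> mono \<Rightarrow> 'a) \<Rightarrow> mono \<Rightarrow> mono \<Rightarrow> 'a" where
  "sc x s \<alpha> \<beta> = x ^ deg \<alpha> * s \<alpha> \<beta>"

lemma R1: "is_bichar r \<Longrightarrow> r (\<alpha> + \<beta>) \<gamma> = D2 \<gamma> (\<lambda>d e. r \<alpha> d * r \<beta> e)"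
  unfolding is_bichar_def D2_def by (simp add: mult.assoc)

lemma R2: "is_bichar r \<Longrightarrow> r \<alpha> (\<beta> + \<gamma>) = D2 \<alpha> (\<lambda>d e. r d \<beta> * r e \<gamma>)"
  unfolding is_bichar_def D2_def by (simp add: mult.assoc)

lemma bichar_intro:
  assumes "\<And>\<alpha>. r 0 \<alpha> = counit \<alpha>" "\<And>\<alpha>. r \<alpha> 0 = counit \<alpha>"
    "\<And>\<alpha> \<beta> \<gamma>. r (\<alpha> + \<beta>) \<gamma> = D2 \<gamma> (\<lambda>d e. r \<alpha> d * r \<beta> e)"
    "\<And>\<alpha> \<beta> \<gamma>. r \<alpha> (\<beta> + \<gamma>) = D2 \<alpha> (\<lambda>d e. r d \<beta> * r e \<gamma>)"
  shows "is_bichar r"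
  using assms unfolding is_bichar_def D2_def by (simp add: mult.assoc)

lemma bichar_0l: "is_bichar r \<Longrightarrow> r 0 \<alpha> = counit \<alpha>" by (simp add: is_bichar_def)
lemma bichar_0r: "is_bichar r \<Longrightarrow> r \<alpha> 0 = counit \<alpha>" by (simp add: is_bichar_def)

lemma transp_bichar: "is_bichar r \<Longrightarrow> is_bichar (transp_bichar r)"
  by (rule bichar_intro) (simp_all add: transp_bichar_def bichar_0l bichar_0r R1 R2)

lemma conv_comm: "conv r t = conv t r"
proof (intro ext)
  fix \<alpha> \<beta>
  have "conv r t \<alpha> \<beta> = D2 \<alpha> (\<lambda>a b. D2 \<beta> (\<lambda>c d. r b c * t a d))"
    unfolding conv_def by (subst D2_swap) (rule refl)
  also have "\<dots> = D2 \<alpha> (\<lambda>a b. D2 \<beta> (\<lambda>c d. r b d * t a c))"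
    by (subst D2_swap) (rule refl)
  also have "\<dots> = conv t r \<alpha> \<beta>" unfolding conv_def by (simp add: mult.commute)
  finally show "conv r t \<alpha> \<beta> = conv t r \<alpha> \<beta>" .
qed

lemma conv_transp: "transp_bichar (conv a b) = conv (transp_bichar a) (transp_bichar b)"
  unfolding transp_bichar_def conv_def by (intro ext) (rule D2_fubini)

lemma conv_std: "conv r std_bichar = r"
proof (intro ext)
  fix \<alpha> \<beta>
  have "conv r std_bichar \<alpha> \<beta> = D2 \<alpha> (\<lambda>a1 a2. counit a2 * D2 \<beta> (\<lambda>b1 b2. r a1 b1 * counit b2))"
    unfolding conv_def std_bichar_def by (simp add: D2_cmult_left mult_ac)
  also have "\<dots> = D2 \<alpha> (\<lambda>a1 a2. counit a2 * r a1 \<beta>)"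
    by (simp add: D2_counit_right)
  also have "\<dots> = r \<alpha> \<beta>" using D2_counit_right[where g="\<lambda>a. r a \<beta>" and \<mu>=\<alpha>] by (simp add: mult.commute)
  finally show "conv r std_bichar \<alpha> \<beta> = r \<alpha> \<beta>" .
qed

lemma deg_eq_0: "deg \<alpha> = 0 \<longleftrightarrow> \<alpha> = 0"
proof
  assume d: "deg \<alpha> = 0"
  show "\<alpha> = 0"
  proof (rule poly_mapping_eqI)
    fix k show "Poly_Mapping.lookup \<alpha> k = Poly_Mapping.lookup 0 k"
      using lookup_le_deg[of \<alpha> k] d by simp
  qed
qed simp

lemma sc_0: "is_bichar s \<Longrightarrow> sc 0 s = std_bichar"
  by (intro ext) (auto simp: sc_def std_bichar_def deg_eq_0 bichar_0l counit_def power_0_left)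

lemma sc_1: "sc 1 s = s" by (simp add: sc_def fun_eq_iff)

lemma sc_sc: "sc x (sc y s) = sc (x * y) s" by (simp add: sc_def fun_eq_iff power_mult_distrib mult_ac)

lemma D2_deg_split: "D2 \<mu> (\<lambda>a b. x ^ deg a * (x ^ deg b * g a b)) = x ^ deg \<mu> * D2 \<mu> g"
proof (subst D2_cmult_left, rule D2_cong)
  fix a b assume "a + b = \<mu>"
  then have "deg \<mu> = deg a + deg b" using deg_add by metis
  then show "x ^ deg a * (x ^ deg b * g a b) = x ^ deg \<mu> * g a b" by (simp add: power_add mult_ac)
qed

lemma sc_bichar: "is_bichar s \<Longrightarrow> is_bichar (sc x s)"
proof (rule bichar_intro)
  assume b: "is_bichar s"
  show "sc x s 0 \<alpha> = counit \<alpha>" for \<alpha> by (simp add: sc_def bichar_0l[OF b])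
  show "sc x s \<alpha> 0 = counit \<alpha>" for \<alpha> by (cases "\<alpha> = 0") (simp_all add: sc_def bichar_0r[OF b] counit_def)
  show "sc x s (\<alpha> + \<beta>) \<gamma> = D2 \<gamma> (\<lambda>d e. sc x s \<alpha> d * sc x s \<beta> e)" for \<alpha> \<beta> \<gamma>
    by (simp add: sc_def R1[OF b] deg_add power_add D2_cmult_left mult_ac)
  show "sc x s \<alpha> (\<beta> + \<gamma>) = D2 \<alpha> (\<lambda>d e. sc x s d \<beta> * sc x s e \<gamma>)" for \<alpha> \<beta> \<gamma>
    using D2_deg_split[where x=x and \<mu>=\<alpha> and g="\<lambda>d e. s d \<beta> * s e \<gamma>"] by (simp add: sc_def R2[OF b] mult_ac)
qed

lemma conv_sc: "conv (sc x a) (sc x b) = sc x (conv a b)"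
proof (intro ext)
  fix \<alpha> \<beta>
  have "conv (sc x a) (sc x b) \<alpha> \<beta> = D2 \<alpha> (\<lambda>a1 a2. x ^ deg a1 * (x ^ deg a2 * D2 \<beta> (\<lambda>b1 b2. a a1 b1 * b a2 b2)))"
    unfolding conv_def sc_def by (simp add: D2_cmult_left mult_ac)
  also have "\<dots> = sc x (conv a b) \<alpha> \<beta>" by (simp add: D2_deg_split sc_def conv_def)
  finally show "conv (sc x a) (sc x b) \<alpha> \<beta> = sc x (conv a b) \<alpha> \<beta>" .
qed

lemma conv_self_sc: "is_bichar s \<Longrightarrow> conv s (sc x s) = sc (1 + x) s"
proof (intro ext)
  fix \<alpha> \<beta> assume b: "is_bichar s"
  have "conv s (sc x s) \<alpha> \<beta> = D2 \<alpha> (\<lambda>a1 a2. x ^ deg a2 * D2 \<beta> (\<lambda>b1 b2. s a1 b1 * s a2 b2))"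
    unfolding conv_def sc_def by (simp add: D2_cmult_left mult_ac)
  also have "\<dots> = D2 \<alpha> (\<lambda>a1 a2. (1 ^ deg a1 * x ^ deg a2) * s (a1 + a2) \<beta>)"
    by (simp add: R1[OF b])
  also have "\<dots> = D2 \<alpha> (\<lambda>a1 a2. (1 ^ deg a1 * x ^ deg a2)) * s \<alpha> \<beta>"
    by (subst D2_cmult_right) (rule D2_cong, simp)
  also have "\<dots> = sc (1 + x) s \<alpha> \<beta>" using D2_binom[where x=1 and y=x and \<mu>=\<alpha>] by (simp add: sc_def)
  finally show "conv s (sc x s) \<alpha> \<beta> = sc (1 + x) s \<alpha> \<beta>" .
qed



lemma nat_nums: "(2::nat) = Suc (Suc 0)" "(3::nat) = Suc (Suc (Suc 0))" "(4::nat) = Suc (Suc (Suc (Suc 0)))"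
  "(5::nat) = Suc (Suc (Suc (Suc (Suc 0))))" "(6::nat) = Suc (Suc (Suc (Suc (Suc (Suc 0)))))"
  by simp_all

lemma start2: "F (mn w P) (mn w' Q) = (\<Sum>c\<in>col P 1. \<Sum>d\<in>col Q 1. F (mn w (cls P c 0)) (mn w' (cls Q d 0)))"
  by (simp add: col_1 cls_def)

lemma start3: "F (mn w P) (mn w' Q) (mn w'' R) = (\<Sum>c\<in>col P 1. \<Sum>d\<in>col Q 1. \<Sum>e\<in>col R 1. F (mn w (cls P c 0)) (mn w' (cls Q d 0)) (mn w'' (cls R e 0)))"
  by (simp add: col_1 cls_def)

lemma perm2:
  assumes "length p = k" "distinct p" "\<forall>x\<in>set p. x < length p" "length q = l" "distinct q" "\<forall>x\<in>set q. x < length q"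
  shows "(\<Sum>c\<in>col P k. \<Sum>d\<in>col Q l. F c d) =
         (\<Sum>c\<in>col P k. \<Sum>d\<in>col Q l. F (\<lambda>x. if x \<in> P then p ! (c x) else 0) (\<lambda>x. if x \<in> Q then q ! (d x) else 0))"
  by (subst permute_list[OF assms(1-3)]) (rule sum.cong[OF refl], rule permute_list[OF assms(4-6)])

lemma perm3:
  assumes "length p = k" "distinct p" "\<forall>x\<in>set p. x < length p" "length q = l" "distinct q" "\<forall>x\<in>set q. x < length q"
    "length p' = k'" "distinct p'" "\<forall>x\<in>set p'. x < length p'"
  shows "(\<Sum>c\<in>col P k. \<Sum>d\<in>col Q l. \<Sum>e\<in>col R k'. F c d e) =
         (\<Sum>c\<in>col P k. \<Sum>d\<in>col Q l. \<Sum>e\<in>col R k'. F (\<lambda>x. if x \<in> P then p ! (c x) else 0) (\<lambda>x. if x \<in> Q then q ! (d x) else 0) (\<lambda>x. if x \<in> R then p' ! (e x) else 0))"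
  by (subst perm2[OF assms(1-6)]) (rule sum.cong[OF refl], rule sum.cong[OF refl], rule permute_list[OF assms(7-9)])

lemma two_reps: "\<exists>w P w' Q. finite P \<and> finite Q \<and> mn w P = \<alpha> \<and> mn w' Q = \<beta>"
  proof -
  obtain w0 n0 where "mn w0 {..<n0} = \<alpha>" using mono_rep by blast
  moreover have "finite {..<n0::nat}" by simp
  obtain w1 n1 where "mn w1 {..<n1} = \<beta>" using mono_rep by blast
  moreover have "finite {..<n1::nat}" by simp
  ultimately show ?thesis by blast
qed

lemma three_reps: "\<exists>w P w' Q w'' R. finite P \<and> finite Q \<and> finite R \<and> mn w P = \<alpha> \<and> mn w' Q = \<beta> \<and> mn w'' R = \<gamma>"
  proof -
  obtain w0 n0 where "mn w0 {..<n0} = \<alpha>" using mono_rep by blast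
  moreover have "finite {..<n0::nat}" by simp
  obtain w1 n1 where "mn w1 {..<n1} = \<beta>" using mono_rep by blast
  moreover have "finite {..<n1::nat}" by simp
  obtain w2 n2 where "mn w2 {..<n2} = \<gamma>" using mono_rep by blast
  moreover have "finite {..<n2::nat}" by simp
  ultimately show ?thesis by blast
qed

lemma conv_assoc: "conv (conv a b) c = conv a (conv b c)"
proof (intro ext)
  fix \<alpha> \<beta>
  obtain w P w' Q where r: "finite P" "finite Q" "mn w P = \<alpha>" "mn w' Q = \<beta>" using two_reps[of \<alpha> \<beta>] by (elim exE conjE) blast
  have L: "conv (conv a b) c (mn w P) (mn w' Q) = (\<Sum>d\<in>col P 3. \<Sum>e\<in>col Q 3.
     a (mn w (cls P d 2)) (mn w' (cls Q e 2)) * b (mn w (cls P d 1)) (mn w' (cls Q e 1)) * c (mn w (cls P d 0)) (mn w' (cls Q e 0)))"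
    using r(1,2) by (subst start2[where F="conv _ _"], simp only: nat_nums)
      (simp add: conv_def flat_simps refine refine_under refine_under2 sum_distrib_left sum_distrib_right)
  have R: "conv a (conv b c) (mn w P) (mn w' Q) = (\<Sum>d\<in>col P 3. \<Sum>e\<in>col Q 3.
     a (mn w (cls P d 1)) (mn w' (cls Q e 1)) * (b (mn w (cls P d 2)) (mn w' (cls Q e 2)) * c (mn w (cls P d 0)) (mn w' (cls Q e 0))))"
    using r(1,2) by (subst start2[where F="conv _ _"], simp only: nat_nums)
      (simp add: conv_def flat_simps refine refine_under refine_under2 sum_distrib_left sum_distrib_right)
  have "conv (conv a b) c (mn w P) (mn w' Q) = conv a (conv b c) (mn w P) (mn w' Q)"
    unfolding L R
    apply (subst perm2[where p="[0,2,1]" and q="[0,2,1]"])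
    apply (simp_all only: nat_nums)
    apply (simp_all)
    apply (intro sum.cong refl)
    apply (simp add: perm_cls_list mult_ac)
    done
  then show "conv (conv a b) c \<alpha> \<beta> = conv a (conv b c) \<alpha> \<beta>" using r by simp
qed

lemma conv_R1:
  assumes ba: "is_bichar a" and bb: "is_bichar b"
  shows "conv a b (\<alpha> + \<beta>) \<gamma> = D2 \<gamma> (\<lambda>d e. conv a b \<alpha> d * conv a b \<beta> e)"
proof -
  obtain w P w' Q w'' R where r: "finite P" "finite Q" "finite R" "mn w P = \<alpha>" "mn w' Q = \<beta>" "mn w'' R = \<gamma>"
    using three_reps[of \<alpha> \<beta> \<gamma>] by (elim exE conjE) blast
  have L: "conv a b (mn w P + mn w' Q) (mn w'' R) = (\<Sum>d\<in>col P 2. \<Sum>da\<in>col Q 2. \<Sum>db\<in>col R 4.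
      a (mn w (cls P d 1)) (mn w'' (cls R db 3)) * a (mn w' (cls Q da 1)) (mn w'' (cls R db 1)) *
      (b (mn w (cls P d 0)) (mn w'' (cls R db 2)) * b (mn w' (cls Q da 0)) (mn w'' (cls R db 0))))"
    using r(1-3) ba bb
    by (subst start3[where F="\<lambda>x y z. conv _ _ (x + y) z"], simp only: nat_nums)
       (simp add: conv_def D2_mult R1 flat_simps refine refine_under refine_under2 sum_distrib_left sum_distrib_right)
  have R: "D2 (mn w'' R) (\<lambda>d e. conv a b (mn w P) d * conv a b (mn w' Q) e) = (\<Sum>d\<in>col P 2. \<Sum>da\<in>col Q 2. \<Sum>db\<in>col R 4.
      a (mn w (cls P d 1)) (mn w'' (cls R db 3)) * b (mn w (cls P d 0)) (mn w'' (cls R db 1)) *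
      (a (mn w' (cls Q da 1)) (mn w'' (cls R db 2)) * b (mn w' (cls Q da 0)) (mn w'' (cls R db 0))))"
    using r(1-3) ba bb
    by (subst start3[where F="\<lambda>x y z. D2 z (\<lambda>d e. conv a b x d * conv a b y e)"], simp only: nat_nums)
       (simp add: conv_def D2_mult R1 flat_simps refine refine_under refine_under2 sum_distrib_left sum_distrib_right)
  have "conv a b (mn w P + mn w' Q) (mn w'' R) = D2 (mn w'' R) (\<lambda>d e. conv a b (mn w P) d * conv a b (mn w' Q) e)"
    unfolding L R
    apply (subst perm3[where p="[0,1]" and q="[0,1]" and p'="[0,2,1,3]"])
    apply (simp_all only: nat_nums)
    apply (simp_all)
    apply (intro sum.cong refl)
    apply (simp add: perm_cls_list mult_ac)
    done
  then show ?thesis using r by simp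
qed

lemma conv_transp_app: "conv (transp_bichar a) (transp_bichar b) x y = conv a b y x"
proof -
  have "conv (transp_bichar a) (transp_bichar b) x y = transp_bichar (conv a b) x y" by (simp only: conv_transp)
  then show ?thesis by (simp add: transp_bichar_def)
qed

lemma conv_bichar:
  assumes ba: "is_bichar a" and bb: "is_bichar b"
  shows "is_bichar (conv a b)"
proof (rule bichar_intro)
  show "conv a b 0 \<alpha> = counit \<alpha>" for \<alpha>
    using D2_counit_left[where g=counit and \<mu>=\<alpha>] by (simp add: conv_def D2_0 bichar_0l[OF ba] bichar_0l[OF bb])
  show "conv a b \<alpha> 0 = counit \<alpha>" for \<alpha>
    using D2_counit_left[where g=counit and \<mu>=\<alpha>] by (simp add: conv_def D2_0 bichar_0r[OF ba] bichar_0r[OF bb])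
  show "conv a b (\<alpha> + \<beta>) \<gamma> = D2 \<gamma> (\<lambda>d e. conv a b \<alpha> d * conv a b \<beta> e)" for \<alpha> \<beta> \<gamma>
    by (rule conv_R1[OF ba bb])
  show "conv a b \<alpha> (\<beta> + \<gamma>) = D2 \<alpha> (\<lambda>d e. conv a b d \<beta> * conv a b e \<gamma>)" for \<alpha> \<beta> \<gamma>
  proof -
    have "conv a b \<alpha> (\<beta> + \<gamma>) = transp_bichar (conv a b) (\<beta> + \<gamma>) \<alpha>" by (simp add: transp_bichar_def)
    also have "\<dots> = conv (transp_bichar a) (transp_bichar b) (\<beta> + \<gamma>) \<alpha>" by (simp add: conv_transp)
    also have "\<dots> = D2 \<alpha> (\<lambda>d e. conv (transp_bichar a) (transp_bichar b) \<beta> d * conv (transp_bichar a) (transp_bichar b) \<gamma> e)"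
      by (rule conv_R1[OF transp_bichar[OF ba] transp_bichar[OF bb]])
    also have "\<dots> = D2 \<alpha> (\<lambda>d e. conv a b d \<beta> * conv a b e \<gamma>)"
      by (simp only: conv_transp_app)
    finally show ?thesis .
  qed
qed



lemma single_ne0[simp]: "Poly_Mapping.single i (Suc n) \<noteq> 0"
  by (metis lookup_single_eq lookup_zero nat.distinct(1))

lemma mn_eq_0: "finite S \<Longrightarrow> mn w S = 0 \<longleftrightarrow> S = {}"
  using deg_mn[of S w] by (metis card_0_eq deg_zero mn_empty)

lemma D2_single: "D2 (Poly_Mapping.single i 1) g = g (Poly_Mapping.single i 1) 0 + g 0 (Poly_Mapping.single i 1)"
proof -
  have e: "Poly_Mapping.single i 1 = mn (\<lambda>_. i) {0::nat}" by (simp add: mn_def)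
  have "Pow {0::nat} = {{}, {0}}" by auto
  then show ?thesis unfolding e by (simp add: bridge insert_Diff_if add.commute)
qed

lemma bichar_single_card:
  assumes b: "is_bichar s" and fS: "finite S" and nz: "s (Poly_Mapping.single i 1) (mn w S) \<noteq> 0"
  shows "card S = 1"
proof (rule ccontr)
  assume c: "card S \<noteq> 1"
  show False
  proof (cases "S = {}")
    case True then show False using nz b by (simp add: bichar_0r counit_def)
  next
    case False
    then obtain y where y: "y \<in> S" by blast
    define S' where "S' = S - {y}"
    have S'ne: "S' \<noteq> {}"
    proof
      assume "S' = {}"
      then have "S = {y}" using y by (auto simp: S'_def)
      then show False using c by simp
    qed
    have fS': "finite S'" using fS by (simp add: S'_def)
    have Si: "S = insert y S'" using y by (auto simp: S'_def)
    have "y \<notin> S'" by (simp add: S'_def)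
    then have eS: "mn w S = Poly_Mapping.single (w y) 1 + mn w S'"
      using fS' by (subst Si) (simp add: mn_insert)
    have m0: "mn w S' \<noteq> 0" using mn_eq_0[OF fS'] S'ne by simp
    have "s (Poly_Mapping.single i 1) (mn w S) =
          s (Poly_Mapping.single i 1) (Poly_Mapping.single (w y) 1) * s 0 (mn w S') +
          s 0 (Poly_Mapping.single (w y) 1) * s (Poly_Mapping.single i 1) (mn w S')"
      unfolding eS R2[OF b] D2_single by simp
    also have "\<dots> = 0" using m0 by (simp add: bichar_0l[OF b] counit_def)
    finally show False using nz by simp
  qed
qed

lemma bichar_homog_set:
  assumes b: "is_bichar s" and fP: "finite P"
  shows "finite Q \<Longrightarrow> s (mn w P) (mn w' Q) \<noteq> 0 \<Longrightarrow> card P = card Q"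
  using fP
proof (induction P arbitrary: Q rule: finite_induct)
  case empty
  then have "mn w' Q = 0" using b by (simp add: bichar_0l counit_def split: if_splits)
  then show ?case using empty mn_eq_0 by simp
next
  case (insert x P)
  have "s (mn w (insert x P)) (mn w' Q) = s (Poly_Mapping.single (w x) 1 + mn w P) (mn w' Q)"
    using insert by (simp add: mn_insert)
  also have "\<dots> = (\<Sum>S\<in>Pow Q. s (Poly_Mapping.single (w x) 1) (mn w' S) * s (mn w P) (mn w' (Q - S)))"
    by (simp add: R1[OF b] bridge insert.prems(1))
  finally have "(\<Sum>S\<in>Pow Q. s (Poly_Mapping.single (w x) 1) (mn w' S) * s (mn w P) (mn w' (Q - S))) \<noteq> 0"
    using insert.prems(2) by simp
  then obtain S where S: "S \<in> Pow Q" "s (Poly_Mapping.single (w x) 1) (mn w' S) * s (mn w P) (mn w' (Q - S)) \<noteq> 0"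
    by (meson sum.neutral)
  have fS: "finite S" using S(1) insert.prems(1) finite_subset by blast
  have n1: "s (Poly_Mapping.single (w x) 1) (mn w' S) \<noteq> 0" using S(2) by auto
  have n2: "s (mn w P) (mn w' (Q - S)) \<noteq> 0" using S(2) by auto
  have c1: "card S = 1" using bichar_single_card[OF b fS n1] .
  have c2: "card P = card (Q - S)" using insert.IH[OF _ n2] insert.prems(1) by simp
  have sub: "S \<subseteq> Q" using S(1) by simp
  have "card (Q - S) = card Q - card S" by (rule card_Diff_subset[OF fS sub])
  moreover have "card S \<le> card Q" by (rule card_mono[OF insert.prems(1) sub])
  ultimately have "card Q = card S + card (Q - S)" by simp
  then show ?case using c1 c2 insert(1,2) by simp
qed

lemma bichar_homog: "is_bichar s \<Longrightarrow> s \<alpha> \<beta> \<noteq> 0 \<Longrightarrow> deg \<alpha> = deg \<beta>"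
proof -
  assume b: "is_bichar s" and nz: "s \<alpha> \<beta> \<noteq> 0"
  obtain w P w' Q where r: "finite P" "finite Q" "mn w P = \<alpha>" "mn w' Q = \<beta>"
    using two_reps[of \<alpha> \<beta>] by (elim exE conjE) blast
  then show ?thesis using bichar_homog_set[OF b r(1) r(2)] nz by (metis deg_mn)
qed

lemma sc_transp: "is_bichar s \<Longrightarrow> transp_bichar (sc x s) = sc x (transp_bichar s)"
proof (intro ext)
  fix \<alpha> \<beta> assume b: "is_bichar s"
  show "transp_bichar (sc x s) \<alpha> \<beta> = sc x (transp_bichar s) \<alpha> \<beta>"
  proof (cases "s \<beta> \<alpha> = 0")
    case False then show ?thesis using bichar_homog[OF b False] by (simp add: sc_def transp_bichar_def)
  qed (simp add: sc_def transp_bichar_def)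
qed



definition X :: "mono \<Rightarrow> (mono \<Rightarrow>\<^sub>0 'a::comm_ring_1)" where "X \<gamma> = Poly_Mapping.single \<gamma> 1"
definition C :: "'a::comm_ring_1 \<Rightarrow> (mono \<Rightarrow>\<^sub>0 'a)" where "C a = Poly_Mapping.single 0 a"

lemma single_CX: "Poly_Mapping.single \<gamma> a = C a * X \<gamma>" by (simp add: C_def X_def mult_single)
lemma C_add: "C (a + b) = C a + C b" by (simp add: C_def single_add)
lemma C_mult: "C (a * b) = C a * C b" by (simp add: C_def mult_single)
lemma C_0[simp]: "C 0 = 0" by (simp add: C_def)
lemma C_1[simp]: "C 1 = 1" by (simp add: C_def)
lemma C_of_nat: "C (of_nat n) = of_nat n" by (simp add: C_def)
lemma C_sum: "C (sum f A) = (\<Sum>a\<in>A. C (f a))" by (rule hom_sum) (simp_all add: C_add)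
lemma C_D2: "C (D2 \<mu> g) = D2 \<mu> (\<lambda>a b. C (g a b))" by (rule D2_hom) (simp_all add: C_add)
lemma X_add: "X (a + b) = X a * X b" by (simp add: X_def mult_single)

lemma lookup_C_mult: "Poly_Mapping.lookup (C a * p) \<mu> = a * Poly_Mapping.lookup p \<mu>"
  by (simp add: C_def mult_map_scale_conv_mult[symmetric] map.rep_eq when_def)

lemma poly_expand: "p = (\<Sum>\<mu>\<in>Poly_Mapping.keys p. C (Poly_Mapping.lookup p \<mu>) * X \<mu>)"
proof (rule poly_mapping_eqI)
  fix k
  have "Poly_Mapping.lookup (\<Sum>\<mu>\<in>Poly_Mapping.keys p. C (Poly_Mapping.lookup p \<mu>) * X \<mu>) k =
        (\<Sum>\<mu>\<in>Poly_Mapping.keys p. if \<mu> = k then Poly_Mapping.lookup p \<mu> else 0)"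
    by (simp add: lookup_sum single_CX[symmetric] lookup_single when_def)
  also have "\<dots> = Poly_Mapping.lookup p k" by (simp add: in_keys_iff)
  finally show "Poly_Mapping.lookup p k = Poly_Mapping.lookup (\<Sum>\<mu>\<in>Poly_Mapping.keys p. C (Poly_Mapping.lookup p \<mu>) * X \<mu>) k" by simp
qed

lemma splits3_D2:
  fixes G :: "mono \<Rightarrow> mono \<Rightarrow> mono \<Rightarrow> 'b::comm_semiring_1"
  shows "(\<Sum>(\<alpha>,\<beta>,\<gamma>)\<in>splits3 \<mu>. of_nat (bcoef \<mu> \<alpha> * bcoef (\<beta> + \<gamma>) \<beta>) * G \<alpha> \<beta> \<gamma>) = D2 \<mu> (\<lambda>\<alpha> \<delta>. D2 \<delta> (\<lambda>\<beta> \<gamma>. G \<alpha> \<beta> \<gamma>))"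
proof -
  have "D2 \<mu> (\<lambda>\<alpha> \<delta>. D2 \<delta> (\<lambda>\<beta> \<gamma>. G \<alpha> \<beta> \<gamma>)) =
    (\<Sum>x\<in>splits \<mu>. \<Sum>y\<in>splits (snd x). of_nat (bcoef \<mu> (fst x)) * (of_nat (bcoef (snd x) (fst y)) * G (fst x) (fst y) (snd y)))"
    by (simp add: D2_def case_prod_unfold sum_distrib_left)
  also have "\<dots> = (\<Sum>z\<in>Sigma (splits \<mu>) (\<lambda>x. splits (snd x)). of_nat (bcoef \<mu> (fst (fst z))) * (of_nat (bcoef (snd (fst z)) (fst (snd z))) * G (fst (fst z)) (fst (snd z)) (snd (snd z))))"
    by (subst sum.Sigma) (simp_all add: finite_splits case_prod_unfold)
  also have "\<dots> = (\<Sum>(\<alpha>,\<beta>,\<gamma>)\<in>splits3 \<mu>. of_nat (bcoef \<mu> \<alpha> * bcoef (\<beta> + \<gamma>) \<beta>) * G \<alpha> \<beta> \<gamma>)"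
    by (rule sum.reindex_bij_witness[where i="\<lambda>(\<alpha>,\<beta>,\<gamma>). ((\<alpha>, \<beta> + \<gamma>), (\<beta>, \<gamma>))" and j="\<lambda>((\<alpha>,\<delta>),(\<beta>,\<gamma>)). (\<alpha>,\<beta>,\<gamma>)"])
       (auto simp: splits_def splits3_def add.assoc mult.assoc)
  finally show ?thesis by simp
qed

definition EQm :: "(mono \<Rightarrow> mono \<Rightarrow> 'a::comm_ring_1) \<Rightarrow> mono \<Rightarrow> (mono \<Rightarrow>\<^sub>0 'a)" where
  "EQm r \<mu> = D2 \<mu> (\<lambda>\<alpha> \<delta>. D2 \<delta> (\<lambda>\<beta> \<gamma>. C (r \<alpha> \<beta>) * X \<gamma>))"

lemma EQ_eq: "EQ r p = (\<Sum>\<mu>\<in>Poly_Mapping.keys p. C (Poly_Mapping.lookup p \<mu>) * EQm r \<mu>)"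
proof -
  have "(\<Sum>(\<alpha>, \<beta>, \<gamma>)\<in>splits3 \<mu>. Poly_Mapping.single \<gamma> (Poly_Mapping.lookup p \<mu> * of_nat (bcoef \<mu> \<alpha> * bcoef (\<beta> + \<gamma>) \<beta>) * r \<alpha> \<beta>))
     = C (Poly_Mapping.lookup p \<mu>) * EQm r \<mu>" for \<mu>
  proof -
    have "(\<Sum>(\<alpha>, \<beta>, \<gamma>)\<in>splits3 \<mu>. Poly_Mapping.single \<gamma> (Poly_Mapping.lookup p \<mu> * of_nat (bcoef \<mu> \<alpha> * bcoef (\<beta> + \<gamma>) \<beta>) * r \<alpha> \<beta>))
       = (\<Sum>(\<alpha>, \<beta>, \<gamma>)\<in>splits3 \<mu>. of_nat (bcoef \<mu> \<alpha> * bcoef (\<beta> + \<gamma>) \<beta>) * (C (Poly_Mapping.lookup p \<mu>) * (C (r \<alpha> \<beta>) * X \<gamma>)))"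
      by (rule sum.cong[OF refl]) (auto simp: single_CX C_mult C_of_nat mult_ac)
    also have "\<dots> = C (Poly_Mapping.lookup p \<mu>) * EQm r \<mu>"
      by (subst splits3_D2) (simp add: EQm_def D2_cmult_left)
    finally show ?thesis .
  qed
  then show ?thesis unfolding EQ_def by simp
qed

lemma EQ_sup:
  assumes "finite K" "Poly_Mapping.keys p \<subseteq> K"
  shows "EQ r p = (\<Sum>\<mu>\<in>K. C (Poly_Mapping.lookup p \<mu>) * EQm r \<mu>)"
  unfolding EQ_eq by (rule sum.mono_neutral_left) (use assms in \<open>auto simp: in_keys_iff\<close>)

lemma EQ_add: "EQ r (p + q) = EQ r p + EQ r q"
proof -
  let ?K = "Poly_Mapping.keys p \<union> Poly_Mapping.keys q"
  have "EQ r (p + q) = (\<Sum>\<mu>\<in>?K. C (Poly_Mapping.lookup (p+q) \<mu>) * EQm r \<mu>)"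
    by (rule EQ_sup) (auto dest: set_mp[OF keys_add])
  also have "\<dots> = (\<Sum>\<mu>\<in>?K. C (Poly_Mapping.lookup p \<mu>) * EQm r \<mu>) + (\<Sum>\<mu>\<in>?K. C (Poly_Mapping.lookup q \<mu>) * EQm r \<mu>)"
    by (simp add: lookup_add C_add distrib_right sum.distrib)
  also have "\<dots> = EQ r p + EQ r q" by (simp add: EQ_sup[of ?K p] EQ_sup[of ?K q])
  finally show ?thesis .
qed

lemma EQ_zero: "EQ r 0 = 0" by (simp add: EQ_eq)

lemma keys_C_mult: "Poly_Mapping.keys (C a * p) \<subseteq> Poly_Mapping.keys p"
  by (auto simp: in_keys_iff lookup_C_mult)

lemma EQ_C: "EQ r (C a * p) = C a * EQ r p"
proof -
  have "EQ r (C a * p) = (\<Sum>\<mu>\<in>Poly_Mapping.keys p. C (Poly_Mapping.lookup (C a * p) \<mu>) * EQm r \<mu>)"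
    by (rule EQ_sup) (simp_all add: keys_C_mult)
  also have "\<dots> = C a * EQ r p"
    unfolding lookup_C_mult C_mult EQ_eq sum_distrib_left by (simp add: mult.assoc)
  finally show ?thesis .
qed

lemma EQ_X: "EQ r (X \<mu>) = EQm r \<mu>"
proof -
  have "EQ r (X \<mu>) = (\<Sum>\<nu>\<in>{\<mu>}. C (Poly_Mapping.lookup (X \<mu>) \<nu>) * EQm r \<nu>)"
    by (rule EQ_sup) (simp_all add: X_def)
  then show ?thesis by (simp add: X_def)
qed

lemma EQ_sum: "EQ r (sum f A) = (\<Sum>a\<in>A. EQ r (f a))" by (rule hom_sum) (simp_all add: EQ_add EQ_zero)
lemma EQ_D2: "EQ r (D2 \<mu> g) = D2 \<mu> (\<lambda>a b. EQ r (g a b))" by (rule D2_hom) (simp_all add: EQ_add EQ_zero)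

definition Bm :: "(mono \<Rightarrow> mono \<Rightarrow> 'a::comm_ring_1) \<Rightarrow> mono \<Rightarrow> mono \<Rightarrow> (mono \<Rightarrow>\<^sub>0 'a)" where
  "Bm t \<alpha> \<beta> = D2 \<alpha> (\<lambda>a1 a2. D2 \<beta> (\<lambda>b1 b2. C (t a2 b2) * X (a1 + b1)))"

lemma bullet_eq: "bullet t p q = (\<Sum>\<alpha>\<in>Poly_Mapping.keys p. \<Sum>\<beta>\<in>Poly_Mapping.keys q. C (Poly_Mapping.lookup p \<alpha>) * C (Poly_Mapping.lookup q \<beta>) * Bm t \<alpha> \<beta>)"
  unfolding bullet_def Bm_def D2_def
  by (simp add: sum_distrib_left case_prod_unfold single_CX C_mult C_of_nat mult_ac)

lemma bullet_sup:
  assumes "finite K1" "Poly_Mapping.keys p \<subseteq> K1" "finite K2" "Poly_Mapping.keys q \<subseteq> K2"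
  shows "bullet t p q = (\<Sum>\<alpha>\<in>K1. \<Sum>\<beta>\<in>K2. C (Poly_Mapping.lookup p \<alpha>) * C (Poly_Mapping.lookup q \<beta>) * Bm t \<alpha> \<beta>)"
proof -
  have "bullet t p q = (\<Sum>\<alpha>\<in>K1. \<Sum>\<beta>\<in>Poly_Mapping.keys q. C (Poly_Mapping.lookup p \<alpha>) * C (Poly_Mapping.lookup q \<beta>) * Bm t \<alpha> \<beta>)"
    unfolding bullet_eq by (rule sum.mono_neutral_left) (use assms in \<open>auto simp: in_keys_iff\<close>)
  also have "\<dots> = (\<Sum>\<alpha>\<in>K1. \<Sum>\<beta>\<in>K2. C (Poly_Mapping.lookup p \<alpha>) * C (Poly_Mapping.lookup q \<beta>) * Bm t \<alpha> \<beta>)"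
    by (intro sum.cong refl sum.mono_neutral_left) (use assms in \<open>auto simp: in_keys_iff\<close>)
  finally show ?thesis .
qed

lemma bullet_add_l: "bullet t (p + p') q = bullet t p q + bullet t p' q"
proof -
  let ?K = "Poly_Mapping.keys p \<union> Poly_Mapping.keys p'"
  let ?L = "Poly_Mapping.keys q"
  let ?S = "\<lambda>f. (\<Sum>\<alpha>\<in>?K. \<Sum>\<beta>\<in>?L. C (Poly_Mapping.lookup f \<alpha>) * C (Poly_Mapping.lookup q \<beta>) * Bm t \<alpha> \<beta>)"
  have 1: "bullet t (p + p') q = ?S (p + p')" by (rule bullet_sup) (auto dest: set_mp[OF keys_add])
  have 2: "bullet t p q = ?S p" by (rule bullet_sup) auto
  have 3: "bullet t p' q = ?S p'" by (rule bullet_sup) auto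
  show ?thesis unfolding 1 2 3 by (simp add: lookup_add C_add distrib_right sum.distrib)
qed

lemma bullet_add_r: "bullet t p (q + q') = bullet t p q + bullet t p q'"
proof -
  let ?K = "Poly_Mapping.keys p"
  let ?L = "Poly_Mapping.keys q \<union> Poly_Mapping.keys q'"
  let ?S = "\<lambda>f. (\<Sum>\<alpha>\<in>?K. \<Sum>\<beta>\<in>?L. C (Poly_Mapping.lookup p \<alpha>) * C (Poly_Mapping.lookup f \<beta>) * Bm t \<alpha> \<beta>)"
  have 1: "bullet t p (q + q') = ?S (q + q')" by (rule bullet_sup) (auto dest: set_mp[OF keys_add])
  have 2: "bullet t p q = ?S q" by (rule bullet_sup) auto
  have 3: "bullet t p q' = ?S q'" by (rule bullet_sup) auto
  show ?thesis unfolding 1 2 3 by (simp add: lookup_add C_add distrib_right distrib_left sum.distrib)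
qed

lemma bullet_C_l: "bullet t (C a * p) q = C a * bullet t p q"
proof -
  have "bullet t (C a * p) q = (\<Sum>\<alpha>\<in>Poly_Mapping.keys p. \<Sum>\<beta>\<in>Poly_Mapping.keys q. C (Poly_Mapping.lookup (C a * p) \<alpha>) * C (Poly_Mapping.lookup q \<beta>) * Bm t \<alpha> \<beta>)"
    by (rule bullet_sup) (simp_all add: keys_C_mult)
  also have "\<dots> = C a * bullet t p q"
    unfolding lookup_C_mult C_mult bullet_eq sum_distrib_left by (simp add: mult.assoc)
  finally show ?thesis .
qed

lemma bullet_C_r: "bullet t p (C a * q) = C a * bullet t p q"
proof -
  have "bullet t p (C a * q) = (\<Sum>\<alpha>\<in>Poly_Mapping.keys p. \<Sum>\<beta>\<in>Poly_Mapping.keys q. C (Poly_Mapping.lookup p \<alpha>) * C (Poly_Mapping.lookup (C a * q) \<beta>) * Bm t \<alpha> \<beta>)"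
    by (rule bullet_sup) (simp_all add: keys_C_mult)
  also have "\<dots> = C a * bullet t p q"
    unfolding lookup_C_mult C_mult bullet_eq sum_distrib_left by (simp add: mult_ac)
  finally show ?thesis .
qed

lemma bullet_X: "bullet t (X \<alpha>) (X \<beta>) = Bm t \<alpha> \<beta>"
  by (simp add: bullet_eq X_def)

lemma bullet_zero_l: "bullet t 0 q = 0" by (simp add: bullet_eq)
lemma bullet_zero_r: "bullet t p 0 = 0" by (simp add: bullet_eq)

lemma bullet_D2_l: "bullet t (D2 \<mu> g) q = D2 \<mu> (\<lambda>a b. bullet t (g a b) q)"
  by (rule D2_hom[where h="\<lambda>x. bullet t x q"]) (simp_all add: bullet_add_l bullet_zero_l)
lemma bullet_D2_r: "bullet t p (D2 \<mu> g) = D2 \<mu> (\<lambda>a b. bullet t p (g a b))"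
  by (rule D2_hom[where h="\<lambda>x. bullet t p x"]) (simp_all add: bullet_add_r bullet_zero_r)
lemma bullet_sum_l: "bullet t (sum f A) q = (\<Sum>a\<in>A. bullet t (f a) q)"
  by (rule hom_sum[where h="\<lambda>x. bullet t x q"]) (simp_all add: bullet_add_l bullet_zero_l)
lemma bullet_sum_r: "bullet t p (sum f A) = (\<Sum>a\<in>A. bullet t p (f a))"
  by (rule hom_sum[where h="\<lambda>x. bullet t p x"]) (simp_all add: bullet_add_r bullet_zero_r)



lemmas main_simps = Bm_def EQ_D2 EQ_C EQ_X EQm_def D2_mult R1 R2 C_mult C_D2 C_sum D2_cmult_left D2_cmult_right
  flat_simps refine refine_under refine_under2 sum_distrib_left sum_distrib_right conv_def transp_bichar_def
  bullet_D2_l bullet_D2_r bullet_C_l bullet_C_r bullet_X EQ_sum bullet_sum_l bullet_sum_r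

lemma main_mono:
  assumes b: "is_bichar r"
  shows "EQ r (Bm t \<alpha> \<beta>) = bullet (conv t (conv r (transp_bichar r))) (EQm r \<alpha>) (EQm r \<beta>)"
proof -
  obtain w P w' Q where rp: "finite P" "finite Q" "mn w P = \<alpha>" "mn w' Q = \<beta>"
    using two_reps[of \<alpha> \<beta>] by (elim exE conjE) blast
  have L: "EQ r (Bm t (mn w P) (mn w' Q)) = (\<Sum>d\<in>col P 6. \<Sum>da\<in>col Q 6.
             C (t (mn w (cls P d 0)) (mn w' (cls Q da 0))) *
             (C (r (mn w (cls P d 5)) (mn w (cls P d 4))) *
              C (r (mn w (cls P d 2)) (mn w' (cls Q da 4))) *
              (C (r (mn w' (cls Q da 5)) (mn w (cls P d 3))) *
               C (r (mn w' (cls Q da 2)) (mn w' (cls Q da 3)))) *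
              X (mn w (cls P d 1) + mn w' (cls Q da 1))))"
    using rp(1,2) b by (subst start2[where F="\<lambda>x y. EQ r (Bm t x y)"], simp only: nat_nums) (simp add: main_simps)
  have R: "bullet (conv t (conv r (transp_bichar r))) (EQm r (mn w P)) (EQm r (mn w' Q)) = (\<Sum>d\<in>col P 6. \<Sum>da\<in>col Q 6.
             C (r (mn w' (cls Q da 1)) (mn w' (cls Q da 2))) *
             (C (r (mn w (cls P d 1)) (mn w (cls P d 2))) *
              (C (t (mn w (cls P d 4)) (mn w' (cls Q da 4))) *
               (C (r (mn w (cls P d 5)) (mn w' (cls Q da 5))) *
                C (r (mn w' (cls Q da 0)) (mn w (cls P d 0)))) *
               X (mn w (cls P d 3) + mn w' (cls Q da 3)))))"
    using rp(1,2) b by (subst start2[where F="\<lambda>x y. bullet (conv t (conv r (transp_bichar r))) (EQm r x) (EQm r y)"], simp only: nat_nums)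
      (simp add: main_simps)
  have "bullet (conv t (conv r (transp_bichar r))) (EQm r (mn w P)) (EQm r (mn w' Q)) = EQ r (Bm t (mn w P) (mn w' Q))"
    unfolding L R
    apply (subst perm2[where p="[4,3,5,0,2,1]" and q="[4,3,1,2,5,0]"])
    apply (simp_all only: nat_nums)
    apply (simp_all)
    apply (intro sum.cong refl)
    apply (simp add: perm_cls_list mult_ac)
    done
  then show ?thesis using rp by simp
qed

theorem main_identity:
  assumes b: "is_bichar r"
  shows "EQ r (bullet t p q) = bullet (conv t (conv r (transp_bichar r))) (EQ r p) (EQ r q)"
proof -
  let ?T = "conv t (conv r (transp_bichar r))"
  have "EQ r (bullet t p q) = (\<Sum>\<alpha>\<in>Poly_Mapping.keys p. \<Sum>\<beta>\<in>Poly_Mapping.keys q.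
      C (Poly_Mapping.lookup p \<alpha>) * (C (Poly_Mapping.lookup q \<beta>) * EQ r (Bm t \<alpha> \<beta>)))"
    unfolding bullet_eq EQ_sum mult.assoc EQ_C ..
  also have "\<dots> = (\<Sum>\<alpha>\<in>Poly_Mapping.keys p. \<Sum>\<beta>\<in>Poly_Mapping.keys q.
      C (Poly_Mapping.lookup p \<alpha>) * (C (Poly_Mapping.lookup q \<beta>) * bullet ?T (EQm r \<alpha>) (EQm r \<beta>)))"
    unfolding main_mono[OF b] ..
  also have "\<dots> = bullet ?T (EQ r p) (EQ r q)"
    unfolding EQ_eq[of r p] EQ_eq[of r q] bullet_sum_l bullet_sum_r bullet_C_l bullet_C_r
    by (subst sum.swap) (simp add: sum_distrib_left mult.left_commute)
  finally show ?thesis .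
qed



lemmas comp_simps = EQ_D2 EQ_C EQ_X EQm_def C_mult C_D2 C_sum D2_cmult_left D2_cmult_right
  flat_simps refine refine_under refine_under2 sum_distrib_left sum_distrib_right conv_def EQ_sum

lemma EQ_EQm: "EQ r (EQm r' \<mu>) = EQm (conv r' r) \<mu>"
proof -
  obtain w n where \<mu>: "mn w {..<n} = \<mu>" using mono_rep by blast
  define P where "P = {..<n::nat}"
  have fP: "finite P" by (simp add: P_def)
  have L: "EQ r (EQm r' (mn w P)) = (\<Sum>d\<in>col P 5.
        C (r' (mn w (cls P d 1)) (mn w (cls P d 2))) * (C (r (mn w (cls P d 3)) (mn w (cls P d 4))) * X (mn w (cls P d 0))))"
    using fP by (subst start_sum[where F="\<lambda>x. EQ r (EQm r' x)"], simp only: nat_nums) (simp add: comp_simps)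
  have R: "EQm (conv r' r) (mn w P) = (\<Sum>d\<in>col P 5.
        C (r' (mn w (cls P d 3)) (mn w (cls P d 4))) * C (r (mn w (cls P d 1)) (mn w (cls P d 2))) * X (mn w (cls P d 0)))"
    using fP by (subst start_sum[where F="\<lambda>x. EQm (conv r' r) x"], simp only: nat_nums) (simp add: comp_simps)
  have "EQm (conv r' r) (mn w P) = EQ r (EQm r' (mn w P))"
    unfolding L R
    apply (subst permute_list[where p="[0,3,4,1,2]"])
    apply (simp_all only: nat_nums)
    apply (simp_all)
    apply (intro sum.cong refl)
    apply (simp add: perm_cls_list mult_ac)
    done
  then show ?thesis using \<mu> by (simp add: P_def)
qed

lemma EQ_comp: "EQ r (EQ r' p) = EQ (conv r' r) p"
  by (simp add: EQ_eq[of r' p] EQ_eq[of "conv r' r" p] EQ_sum EQ_C EQ_EQm)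

lemma C_counit: "C (counit \<beta>) = counit \<beta>" by (simp add: counit_def)

lemma EQm_std: "EQm std_bichar \<mu> = X \<mu>"
proof -
  have "EQm std_bichar \<mu> = D2 \<mu> (\<lambda>\<alpha> \<delta>. counit \<alpha> * D2 \<delta> (\<lambda>\<beta> \<gamma>. counit \<beta> * X \<gamma>))"
    unfolding EQm_def std_bichar_def C_mult C_counit by (simp add: D2_cmult_left mult.assoc)
  also have "\<dots> = X \<mu>" by (simp add: D2_counit_left)
  finally show ?thesis .
qed

lemma EQ_std: "EQ std_bichar p = p"
  by (simp add: EQ_eq EQm_std poly_expand[symmetric])

lemma EQ_one: "is_bichar r \<Longrightarrow> EQ r (Poly_Mapping.single 0 1) = Poly_Mapping.single 0 1"
proof -
  assume b: "is_bichar r"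
  have "Poly_Mapping.single 0 1 = (X 0 :: mono \<Rightarrow>\<^sub>0 'a)" by (simp add: X_def)
  moreover have "EQ r (X 0) = X 0"
    by (simp add: EQ_X EQm_def D2_0 bichar_0l[OF b] counit_def)
  ultimately show ?thesis by simp
qed

lemma EQ_bij: "is_bichar r \<Longrightarrow> bij (EQ r)"
proof -
  assume b: "is_bichar r"
  let ?r' = "sc (-1) r"
  have c1: "conv r ?r' = std_bichar" using conv_self_sc[OF b, of "-1"] sc_0[OF b] by simp
  have c2: "conv ?r' r = std_bichar" using c1 conv_comm by metis
  show ?thesis
  proof (rule o_bij[where g="EQ ?r'"])
    show "EQ ?r' \<circ> EQ r = id" by (simp add: fun_eq_iff EQ_comp c1 EQ_std)
    show "EQ r \<circ> EQ ?r' = id" by (simp add: fun_eq_iff EQ_comp c2 EQ_std)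
  qed
qed



theorem theorem3p1:
  fixes emb :: "complex \<Rightarrow> 'a::comm_ring_1"
    and s1 s2 :: "mono \<Rightarrow> mono \<Rightarrow> 'a"
  assumes "complex_algebra_structure emb"
    and "symmetric_bichar s1"
    and "symmetric_bichar s2"
  shows "\<exists>r. is_bichar r \<and> bij (EQ r) \<and>
           EQ r (Poly_Mapping.single 0 1) = Poly_Mapping.single 0 1 \<and>
           (\<forall>p q. EQ r (bullet s1 p q) = bullet s2 (EQ r p) (EQ r q))"
proof -
  have e1: "emb 1 = 1" and eadd: "\<And>x y. emb (x + y) = emb x + emb y"
    using assms(1) unfolding complex_algebra_structure_def by auto
  define h where "h = emb (1/2)"
  have h2: "h * (1 + 1) = 1"
  proof -
    have "h * (1 + 1) = h + h" by (simp add: algebra_simps)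
    also have "\<dots> = emb (1/2 + 1/2)" unfolding h_def by (rule eadd[symmetric])
    also have "\<dots> = 1" using e1 by simp
    finally show ?thesis .
  qed
  have b1: "is_bichar s1" and t1: "transp_bichar s1 = s1"
    using assms(2) unfolding symmetric_bichar_def by auto
  have b2: "is_bichar s2" and t2: "transp_bichar s2 = s2"
    using assms(3) unfolding symmetric_bichar_def by auto
  define u where "u = conv s2 (sc (-1) s1)"
  have bu: "is_bichar u" unfolding u_def by (intro conv_bichar b2 sc_bichar b1)
  have tu: "transp_bichar u = u"
    unfolding u_def conv_transp sc_transp[OF b1] t1 t2 ..
  define r where "r = sc h u"
  have br: "is_bichar r" unfolding r_def by (rule sc_bichar[OF bu])
  have tr: "transp_bichar r = r" unfolding r_def sc_transp[OF bu] tu ..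
  have crr: "conv r (transp_bichar r) = u"
  proof -
    have "conv r (transp_bichar r) = conv r r" by (simp only: tr)
    also have "\<dots> = sc h (conv u u)" unfolding r_def conv_sc ..
    also have "conv u u = sc (1 + 1) u" using conv_self_sc[OF bu, of 1] sc_1[of u] by simp
    also have "sc h (sc (1 + 1) u) = u" by (simp only: sc_sc h2 sc_1)
    finally show ?thesis .
  qed
  have cs: "conv s1 u = s2"
  proof -
    have "conv s1 u = conv (conv s1 s2) (sc (-1) s1)" unfolding u_def conv_assoc ..
    also have "\<dots> = conv (conv s2 s1) (sc (-1) s1)" by (simp add: conv_comm[of s1 s2])
    also have "\<dots> = conv s2 (conv s1 (sc (-1) s1))" by (rule conv_assoc)
    also have "conv s1 (sc (-1) s1) = std_bichar" using conv_self_sc[OF b1, of "-1"] sc_0[OF b1] by simp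
    finally show ?thesis by (simp add: conv_std)
  qed
  show ?thesis
  proof (intro exI[of _ r] conjI allI)
    show "is_bichar r" by (rule br)
    show "bij (EQ r)" by (rule EQ_bij[OF br])
    show "EQ r (Poly_Mapping.single 0 1) = Poly_Mapping.single 0 1" by (rule EQ_one[OF br])
    fix p q
    show "EQ r (bullet s1 p q) = bullet s2 (EQ r p) (EQ r q)"
      unfolding main_identity[OF br] crr cs ..
  qed
qed


end
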